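(* For $j\in\{1,\dots,k\}$ let $F_j\colon\mathbb B^{\alpha^j}\to\mathbb C$ ($j\le k+1$) be functors and $\phi_j\colon F_j\to F_{j+1}$ transformations of type $|\alpha^j|\xrightarrow{\sigma_j}n_j\xleftarrow{\tau_j}|\alpha^{j+1}|$. Suppose the type $|\alpha^1|\to l\leftarrow|\alpha^{k+1}|$ of $\phi_k\circ\cdots\circ\phi_1$ is computed by iterated pushouts in finite sets, and let $\xi_j\colon n_j\to l$ be the induced map from $n_j$ to $l$. Let $i\in l$. If the $i$-th connected component of the composite graph $\Gamma(\phi_k)\circ\cdots\circ\Gamma(\phi_1)$ is acyclic and, for all $j\in\{1,\dots,k\}$ and all $x\in\xi_j^{-1}\{i\}$, the transformation $\phi_j$ is dinatural in its $x$-th variable, then $\phi_k\circ\cdots\circ\phi_1$ is dinatural in its $i$-th variable.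
   Context: Notation: for $k\in\mathbb N$, $k$ also denotes $\{1,\dots,k\}$. For $\alpha\in\{+,-\}^*$, $\mathbb B^\alpha=\mathbb B^{\alpha_1}\times\cdots\times\mathbb B^{\alpha_{|\alpha|}}$ with $\mathbb B^+=\mathbb B$, $\mathbb B^-=\mathbb B^{op}$. For $\mathbf A=(A_1,\dots,A_n)$ and $\sigma\colon k\to n$, $\mathbf A\sigma=(A_{\sigma1},\dots,A_{\sigma k})$. A morphism $f\colon A\to B$ placed in a contravariant argument is regarded as a morphism $B\to A$ of $\mathbb B^{op}$. A transformation $\phi\colon F\to G$ of type $|\alpha|\xrightarrow{\sigma}n\xleftarrow{\tau}|\beta|$ ($\sigma,\tau$ arbitrary functions) is a family $\phi_{\mathbf A}\colon F(\mathbf A\sigma)\to G(\mathbf A\tau)$, $\mathbf A\in\mathrm{Ob}(\mathbb B)^n$; $A_i$ is its $i$-th variable. $\mathbf A[X,Y/i]\sigma$ is the tuple whose $j$-th entry is $X$ if $\sigma j=i,\alpha_j=-$, $Y$ if $\sigma j=i,\alpha_j=+$, and $A_{\sigma j}$ (or $1_{A_{\sigma j}}$ when $X,Y$ are morphisms) otherwise; $\mathbf A[X/i]=\mathbf A[X,X/i]$. $\phi$ is dinatural in its $i$-th variable if for all objects $A_j$ ($j\neq i$) and all $f\colon A\to B$: $G(\mathbf A[A,f/i]\tau)\circ\phi_{\mathbf A[A/i]}\circ F(\mathbf A[f,A/i]\sigma)=G(\mathbf A[f,B/i]\tau)\circ\phi_{\mathbf A[B/i]}\circ F(\mathbf A[B,f/i]\sigma)$.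 Vertical composition of $\phi$ with $\psi\colon G\to H$ of type $|\beta|\xrightarrow{\eta}m\xleftarrow{\theta}|\gamma|$: with $\zeta\colon n\to l$, $\xi\colon m\to l$ a pushout of $\tau,\eta$, $\psi\circ\phi$ has type $(\zeta\sigma,\xi\theta)$ and components $\psi_{\mathbf A\xi}\circ\phi_{\mathbf A\zeta}$. Iterating gives $\phi_k\circ\cdots\circ\phi_1$, whose type is given by pasting pushouts; $\xi_j$ is the composite of the pushout maps from $n_j$ to the final set $l$. Composite graph $\Gamma(\phi_k)\circ\cdots\circ\Gamma(\phi_1)$: directed bipartite graph whose places are the disjoint union of $|\alpha^1|,\dots,|\alpha^{k+1}|$ and whose transitions are $n_1\sqcup\cdots\sqcup n_k$; for $t\in n_j$: arc from place $p$ of block $\alpha^j$ to $t$ iff $\sigma_j p=t$ and $\alpha^j_p=+$, from $t$ to it iff $\sigma_j p=t$ and $\alpha^j_p=-$; arc from place $p$ of block $\alpha^{j+1}$ to $t$ iff $\tau_j p=t$ and $\alpha^{j+1}_p=-$, from $t$ to it iff $\tau_jp=t$ and $\alpha^{j+1}_p=+$. Its connected components correspond bijectively to $l$; the $i$-th one contains the transitions $t\in n_j$ with $\xi_j t=i$. Acyclic means without directed cycles. *)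

theory Defs
  imports Main
begin

record ('o, 'm) category =
  Ob  :: "'o set"
  Ar  :: "'m set"
  Dom :: "'m \<Rightarrow> 'o"
  Cod :: "'m \<Rightarrow> 'o"
  Id  :: "'o \<Rightarrow> 'm"
  Cmp :: "'m \<Rightarrow> 'm \<Rightarrow> 'm"   (* Cmp C g f = g \<circ> f *)

definition is_category :: "('o, 'm) category \<Rightarrow> bool" where
  "is_category C \<longleftrightarrow>
     (\<forall>f \<in> Ar C. Dom C f \<in> Ob C \<and> Cod C f \<in> Ob C) \<and>
     (\<forall>A \<in> Ob C. Id C A \<in> Ar C \<and> Dom C (Id C A) = A \<and> Cod C (Id C A) = A) \<and>
     (\<forall>f \<in> Ar C. \<forall>g \<in> Ar C. Cod C f = Dom C g \<longrightarrow>
        Cmp C g f \<in> Ar C \<and> Dom C (Cmp C g f) = Dom C f \<and> Cod C (Cmp C g f) = Cod C g) \<and>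
     (\<forall>f \<in> Ar C. Cmp C f (Id C (Dom C f)) = f \<and> Cmp C (Id C (Cod C f)) f = f) \<and>
     (\<forall>f \<in> Ar C. \<forall>g \<in> Ar C. \<forall>h \<in> Ar C. Cod C f = Dom C g \<longrightarrow> Cod C g = Dom C h \<longrightarrow>
        Cmp C h (Cmp C g f) = Cmp C (Cmp C h g) f)"

text \<open>A word alpha is a list of variances; tuples of
objects/morphisms are lists of the same length. An arrow in a contravariant
position is a B-arrow regarded as an arrow of B^op.\<close>

datatype variance = Pos | Neg

definition srcs :: "('o, 'm) category \<Rightarrow> variance list \<Rightarrow> 'm list \<Rightarrow> 'o list" where
  "srcs B \<alpha> fs = map (\<lambda>p. if \<alpha> ! p = Pos then Dom B (fs ! p) else Cod B (fs ! p)) [0..<length \<alpha>]"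

definition tgts :: "('o, 'm) category \<Rightarrow> variance list \<Rightarrow> 'm list \<Rightarrow> 'o list" where
  "tgts B \<alpha> fs = map (\<lambda>p. if \<alpha> ! p = Pos then Cod B (fs ! p) else Dom B (fs ! p)) [0..<length \<alpha>]"

definition cmps :: "('o, 'm) category \<Rightarrow> variance list \<Rightarrow> 'm list \<Rightarrow> 'm list \<Rightarrow> 'm list" where
  "cmps B \<alpha> gs fs = map (\<lambda>p. if \<alpha> ! p = Pos then Cmp B (gs ! p) (fs ! p) else Cmp B (fs ! p) (gs ! p)) [0..<length \<alpha>]"

definition is_functor ::
  "('o, 'm) category \<Rightarrow> ('c, 'd) category \<Rightarrow> variance list \<Rightarrow>
   ('o list \<Rightarrow> 'c) \<Rightarrow> ('m list \<Rightarrow> 'd) \<Rightarrow> bool" where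
  "is_functor B C \<alpha> Fo Fm \<longleftrightarrow>
     (\<forall>As. length As = length \<alpha> \<and> set As \<subseteq> Ob B \<longrightarrow> Fo As \<in> Ob C) \<and>
     (\<forall>fs. length fs = length \<alpha> \<and> set fs \<subseteq> Ar B \<longrightarrow>
        Fm fs \<in> Ar C \<and> Dom C (Fm fs) = Fo (srcs B \<alpha> fs) \<and> Cod C (Fm fs) = Fo (tgts B \<alpha> fs)) \<and>
     (\<forall>As. length As = length \<alpha> \<and> set As \<subseteq> Ob B \<longrightarrow> Fm (map (Id B) As) = Id C (Fo As)) \<and>
     (\<forall>fs gs. length fs = length \<alpha> \<and> set fs \<subseteq> Ar B \<and> length gs = length \<alpha> \<and> set gs \<subseteq> Ar B
        \<and> tgts B \<alpha> fs = srcs B \<alpha> gs \<longrightarrow> Fm (cmps B \<alpha> gs fs) = Cmp C (Fm gs) (Fm fs))"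

text \<open>Variables and positions are 0-based: the set k is rendered as {0..<k}.
A tuple A \<in> Ob(B)^n is a list of length n; A\<sigma> is reindex \<sigma> m As.\<close>

definition reindex :: "(nat \<Rightarrow> nat) \<Rightarrow> nat \<Rightarrow> 'a list \<Rightarrow> 'a list" where
  "reindex \<sigma> m As = map (\<lambda>j. As ! \<sigma> j) [0..<m]"

definition maps_into :: "(nat \<Rightarrow> nat) \<Rightarrow> nat \<Rightarrow> nat \<Rightarrow> bool" where
  "maps_into f a b \<longleftrightarrow> (\<forall>x < a. f x < b)"

definition is_transformation ::
  "('o, 'm) category \<Rightarrow> ('c, 'd) category \<Rightarrow> variance list \<Rightarrow> variance list \<Rightarrow>
   ('o list \<Rightarrow> 'c) \<Rightarrow> ('o list \<Rightarrow> 'c) \<Rightarrow> nat \<Rightarrow> (nat \<Rightarrow> nat) \<Rightarrow> (nat \<Rightarrow> nat) \<Rightarrow>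
   ('o list \<Rightarrow> 'd) \<Rightarrow> bool" where
  "is_transformation B C \<alpha> \<beta> Fo Go n \<sigma> \<tau> \<phi> \<longleftrightarrow>
     maps_into \<sigma> (length \<alpha>) n \<and> maps_into \<tau> (length \<beta>) n \<and>
     (\<forall>As. length As = n \<and> set As \<subseteq> Ob B \<longrightarrow>
        \<phi> As \<in> Ar C \<and> Dom C (\<phi> As) = Fo (reindex \<sigma> (length \<alpha>) As)
                    \<and> Cod C (\<phi> As) = Go (reindex \<tau> (length \<beta>) As))"

definition subst_arr ::
  "('o, 'm) category \<Rightarrow> variance list \<Rightarrow> (nat \<Rightarrow> nat) \<Rightarrow> 'o list \<Rightarrow> nat \<Rightarrow> 'm \<Rightarrow> 'm \<Rightarrow> 'm list" where
  "subst_arr B \<alpha> \<sigma> As i X Y =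
     map (\<lambda>j. if \<sigma> j = i then (if \<alpha> ! j = Neg then X else Y) else Id B (As ! \<sigma> j)) [0..<length \<alpha>]"

definition dinatural_in ::
  "('o, 'm) category \<Rightarrow> ('c, 'd) category \<Rightarrow> variance list \<Rightarrow> variance list \<Rightarrow>
   ('m list \<Rightarrow> 'd) \<Rightarrow> ('m list \<Rightarrow> 'd) \<Rightarrow> nat \<Rightarrow> (nat \<Rightarrow> nat) \<Rightarrow> (nat \<Rightarrow> nat) \<Rightarrow>
   ('o list \<Rightarrow> 'd) \<Rightarrow> nat \<Rightarrow> bool" where
  "dinatural_in B C \<alpha> \<beta> Fm Gm n \<sigma> \<tau> \<phi> i \<longleftrightarrow>
     (\<forall>As f. length As = n \<and> set As \<subseteq> Ob B \<and> f \<in> Ar B \<longrightarrow>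
        (let A = Dom B f; B' = Cod B f in
          Cmp C (Cmp C (Gm (subst_arr B \<beta> \<tau> As i (Id B A) f)) (\<phi> (As[i := A])))
                (Fm (subst_arr B \<alpha> \<sigma> As i f (Id B A)))
        = Cmp C (Cmp C (Gm (subst_arr B \<beta> \<tau> As i f (Id B B'))) (\<phi> (As[i := B'])))
                (Fm (subst_arr B \<alpha> \<sigma> As i (Id B B') f))))"

text \<open>The finite set a is {0..<a}; maps are functions nat \<Rightarrow> nat mapping into the target.\<close>
definition is_pushout ::
  "nat \<Rightarrow> nat \<Rightarrow> nat \<Rightarrow> (nat \<Rightarrow> nat) \<Rightarrow> (nat \<Rightarrow> nat) \<Rightarrow> nat \<Rightarrow> (nat \<Rightarrow> nat) \<Rightarrow> (nat \<Rightarrow> nat) \<Rightarrow> bool" where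
  "is_pushout a b c f g d h k \<longleftrightarrow>
     maps_into f a b \<and> maps_into g a c \<and> maps_into h b d \<and> maps_into k c d \<and>
     (\<forall>x < a. h (f x) = k (g x)) \<and>
     (\<forall>e u v. maps_into u b e \<and> maps_into v c e \<and> (\<forall>x < a. u (f x) = v (g x)) \<longrightarrow>
        (\<exists>w. maps_into w d e \<and> (\<forall>y < b. w (h y) = u y) \<and> (\<forall>z < c. w (k z) = v z)) \<and>
        (\<forall>w w'. (\<forall>y < b. w (h y) = u y) \<and> (\<forall>z < c. w (k z) = v z) \<and>
                (\<forall>y < b. w' (h y) = u y) \<and> (\<forall>z < c. w' (k z) = v z) \<longrightarrow> (\<forall>x < d. w x = w' x)))"

text \<open>Iterated pushouts computing the type of phi_{k-1} o ... o phi_0 (0-based).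
m j is the set of variables of phi_j o ... o phi_0, with m 0 = n 0.
For 1 \<le> j < k: the square with legs rleg (j-1): |alpha j| \<rightarrow> m (j-1) (right leg of the
composite so far) and sigma j: |alpha j| \<rightarrow> n j is a pushout with injections
zeta j : m (j-1) \<rightarrow> m j and xip j : n j \<rightarrow> m j.\<close>
definition rleg :: "(nat \<Rightarrow> nat \<Rightarrow> nat) \<Rightarrow> (nat \<Rightarrow> nat \<Rightarrow> nat) \<Rightarrow> nat \<Rightarrow> nat \<Rightarrow> nat" where
  "rleg \<tau> xip j = (if j = 0 then \<tau> 0 else xip j \<circ> \<tau> j)"

definition iterated_pushouts ::
  "nat \<Rightarrow> (nat \<Rightarrow> variance list) \<Rightarrow> (nat \<Rightarrow> nat) \<Rightarrow> (nat \<Rightarrow> nat \<Rightarrow> nat) \<Rightarrow> (nat \<Rightarrow> nat \<Rightarrow> nat) \<Rightarrow>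
   (nat \<Rightarrow> nat) \<Rightarrow> (nat \<Rightarrow> nat \<Rightarrow> nat) \<Rightarrow> (nat \<Rightarrow> nat \<Rightarrow> nat) \<Rightarrow> bool" where
  "iterated_pushouts k \<alpha> n \<sigma> \<tau> m zeta xip \<longleftrightarrow>
     m 0 = n 0 \<and>
     (\<forall>j. 1 \<le> j \<and> j < k \<longrightarrow>
        is_pushout (length (\<alpha> j)) (m (j - 1)) (n j) (rleg \<tau> xip (j - 1)) (\<sigma> j) (m j) (zeta j) (xip j))"

primrec zchain :: "(nat \<Rightarrow> nat \<Rightarrow> nat) \<Rightarrow> nat \<Rightarrow> nat \<Rightarrow> nat \<Rightarrow> nat" where
  "zchain zeta j 0 x = x"
| "zchain zeta j (Suc K) x = (if Suc K \<le> j then x else zeta (Suc K) (zchain zeta j K x))"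

definition induced_xi :: "nat \<Rightarrow> (nat \<Rightarrow> nat \<Rightarrow> nat) \<Rightarrow> (nat \<Rightarrow> nat \<Rightarrow> nat) \<Rightarrow> nat \<Rightarrow> nat \<Rightarrow> nat" where
  "induced_xi k zeta xip j = zchain zeta j (k - 1) \<circ> (if j = 0 then id else xip j)"

primrec comp_components ::
  "('c, 'd) category \<Rightarrow> (nat \<Rightarrow> 'o list \<Rightarrow> 'd) \<Rightarrow> (nat \<Rightarrow> nat) \<Rightarrow> (nat \<Rightarrow> nat \<Rightarrow> nat) \<Rightarrow>
   nat \<Rightarrow> 'o list \<Rightarrow> 'd" where
  "comp_components C \<phi> n xi 0 As = \<phi> 0 (reindex (xi 0) (n 0) As)"
| "comp_components C \<phi> n xi (Suc j) As =
     Cmp C (\<phi> (Suc j) (reindex (xi (Suc j)) (n (Suc j)) As)) (comp_components C \<phi> n xi j As)"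

datatype node = Place nat nat | Trans nat nat

text \<open>Places: Place j p, block j \<le> k (0-based: block j is |alpha j|), p < length (alpha j).
Transitions: Trans j t, j < k, t < n j.\<close>
definition cgraph_arcs ::
  "nat \<Rightarrow> (nat \<Rightarrow> variance list) \<Rightarrow> (nat \<Rightarrow> nat) \<Rightarrow> (nat \<Rightarrow> nat \<Rightarrow> nat) \<Rightarrow> (nat \<Rightarrow> nat \<Rightarrow> nat) \<Rightarrow>
   (node \<times> node) set" where
  "cgraph_arcs k \<alpha> n \<sigma> \<tau> =
     {(Place j p, Trans j t) | j p t. j < k \<and> t < n j \<and> p < length (\<alpha> j) \<and> \<sigma> j p = t \<and> \<alpha> j ! p = Pos}
   \<union> {(Trans j t, Place j p) | j p t. j < k \<and> t < n j \<and> p < length (\<alpha> j) \<and> \<sigma> j p = t \<and> \<alpha> j ! p = Neg}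
   \<union> {(Place (Suc j) p, Trans j t) | j p t. j < k \<and> t < n j \<and> p < length (\<alpha> (Suc j)) \<and> \<tau> j p = t \<and> \<alpha> (Suc j) ! p = Neg}
   \<union> {(Trans j t, Place (Suc j) p) | j p t. j < k \<and> t < n j \<and> p < length (\<alpha> (Suc j)) \<and> \<tau> j p = t \<and> \<alpha> (Suc j) ! p = Pos}"

definition component ::
  "(node \<times> node) set \<Rightarrow> nat \<Rightarrow> (nat \<Rightarrow> nat) \<Rightarrow> (nat \<Rightarrow> nat \<Rightarrow> nat) \<Rightarrow> nat \<Rightarrow> node set" where
  "component E k n xi i =
     {v. \<exists>j t. j < k \<and> t < n j \<and> xi j t = i \<and> (Trans j t, v) \<in> (E \<union> E\<inverse>)\<^sup>*}"

definition acyclic_on :: "(node \<times> node) set \<Rightarrow> node set \<Rightarrow> bool" where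
  "acyclic_on E V \<longleftrightarrow> acyclic (E \<inter> (V \<times> V))"

end

theory Submission
  imports Defs
begin


lemma neq_Pos[simp]: "(v \<noteq> Pos) = (v = Neg)" by (cases v) auto
lemma neq_Neg[simp]: "(v \<noteq> Neg) = (v = Pos)" by (cases v) auto

lemma cat_dom_cod: "is_category C \<Longrightarrow> f \<in> Ar C \<Longrightarrow> Dom C f \<in> Ob C \<and> Cod C f \<in> Ob C"
  by (simp add: is_category_def)
lemma cat_id: "is_category C \<Longrightarrow> A \<in> Ob C \<Longrightarrow> Id C A \<in> Ar C \<and> Dom C (Id C A) = A \<and> Cod C (Id C A) = A"
  by (simp add: is_category_def)
lemma cat_comp: "is_category C \<Longrightarrow> f \<in> Ar C \<Longrightarrow> g \<in> Ar C \<Longrightarrow> Cod C f = Dom C g \<Longrightarrow>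
   Cmp C g f \<in> Ar C \<and> Dom C (Cmp C g f) = Dom C f \<and> Cod C (Cmp C g f) = Cod C g"
  by (simp add: is_category_def)
lemma cat_idl: "is_category C \<Longrightarrow> f \<in> Ar C \<Longrightarrow> Cod C f = B \<Longrightarrow> Cmp C (Id C B) f = f"
  by (auto simp add: is_category_def)
lemma cat_idr: "is_category C \<Longrightarrow> f \<in> Ar C \<Longrightarrow> Dom C f = A \<Longrightarrow> Cmp C f (Id C A) = f"
  by (auto simp add: is_category_def)
lemma cat_assoc: "is_category C \<Longrightarrow> f \<in> Ar C \<Longrightarrow> g \<in> Ar C \<Longrightarrow> h \<in> Ar C \<Longrightarrow>
   Cod C f = Dom C g \<Longrightarrow> Cod C g = Dom C h \<Longrightarrow> Cmp C h (Cmp C g f) = Cmp C (Cmp C h g) f"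
  unfolding is_category_def by blast

lemma fun_ar: "is_functor B C \<alpha> Fo Fm \<Longrightarrow> length fs = length \<alpha> \<Longrightarrow> set fs \<subseteq> Ar B \<Longrightarrow>
   Fm fs \<in> Ar C \<and> Dom C (Fm fs) = Fo (srcs B \<alpha> fs) \<and> Cod C (Fm fs) = Fo (tgts B \<alpha> fs)"
  unfolding is_functor_def by blast
lemma fun_id: "is_functor B C \<alpha> Fo Fm \<Longrightarrow> length As = length \<alpha> \<Longrightarrow> set As \<subseteq> Ob B \<Longrightarrow>
   Fm (map (Id B) As) = Id C (Fo As)"
  unfolding is_functor_def by blast
lemma fun_cmp: "is_functor B C \<alpha> Fo Fm \<Longrightarrow> length fs = length \<alpha> \<Longrightarrow> set fs \<subseteq> Ar B \<Longrightarrow>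
   length gs = length \<alpha> \<Longrightarrow> set gs \<subseteq> Ar B \<Longrightarrow> tgts B \<alpha> fs = srcs B \<alpha> gs \<Longrightarrow>
   Fm (cmps B \<alpha> gs fs) = Cmp C (Fm gs) (Fm fs)"
  unfolding is_functor_def by blast

lemma length_srcs[simp]: "length (srcs B \<alpha> fs) = length \<alpha>" by (simp add: srcs_def)
lemma length_tgts[simp]: "length (tgts B \<alpha> fs) = length \<alpha>" by (simp add: tgts_def)
lemma length_cmps[simp]: "length (cmps B \<alpha> gs fs) = length \<alpha>" by (simp add: cmps_def)
lemma length_subst[simp]: "length (subst_arr B \<alpha> \<sigma> As i X Y) = length \<alpha>" by (simp add: subst_arr_def)
lemma length_reindex[simp]: "length (reindex \<sigma> m As) = m" by (simp add: reindex_def)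
lemma nth_srcs[simp]: "p < length \<alpha> \<Longrightarrow> srcs B \<alpha> fs ! p = (if \<alpha> ! p = Pos then Dom B (fs ! p) else Cod B (fs ! p))"
  by (simp add: srcs_def)
lemma nth_tgts[simp]: "p < length \<alpha> \<Longrightarrow> tgts B \<alpha> fs ! p = (if \<alpha> ! p = Pos then Cod B (fs ! p) else Dom B (fs ! p))"
  by (simp add: tgts_def)
lemma nth_cmps[simp]: "p < length \<alpha> \<Longrightarrow> cmps B \<alpha> gs fs ! p = (if \<alpha> ! p = Pos then Cmp B (gs ! p) (fs ! p) else Cmp B (fs ! p) (gs ! p))"
  by (simp add: cmps_def)
lemma nth_subst[simp]: "p < length \<alpha> \<Longrightarrow> subst_arr B \<alpha> \<sigma> As i X Y ! p = (if \<sigma> p = i then (if \<alpha> ! p = Neg then X else Y) else Id B (As ! \<sigma> p))"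
  by (simp add: subst_arr_def)
lemma nth_reindex[simp]: "p < m \<Longrightarrow> reindex \<sigma> m As ! p = As ! \<sigma> p"
  by (simp add: reindex_def)


lemma set_map_subset: "(\<And>p. p < N \<Longrightarrow> h p \<in> S) \<Longrightarrow> set (map h [0..<N]) \<subseteq> S"
  by auto

lemma nth_in_set_sub: "set xs \<subseteq> S \<Longrightarrow> p < length xs \<Longrightarrow> xs ! p \<in> S"
  by (meson nth_mem subsetD)

lemma chain5:
  assumes c: "is_category C"
    and ar: "P \<in> Ar C" "Q \<in> Ar C" "R \<in> Ar C" "S \<in> Ar C" "U \<in> Ar C" "r \<in> Ar C"
    and t: "Cod C r = Dom C U" "Cod C U = Dom C S" "Cod C S = Dom C R" "Cod C R = Dom C Q" "Cod C Q = Dom C P"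
  shows "Cmp C (Cmp C P Q) (Cmp C R (Cmp C (Cmp C S U) r)) = Cmp C P (Cmp C (Cmp C (Cmp C Q R) S) (Cmp C U r))"
proof -
  have 1: "Cmp C (Cmp C S U) r = Cmp C S (Cmp C U r)" using cat_assoc[OF c] ar t by metis
  have W: "Cmp C U r \<in> Ar C" "Dom C (Cmp C U r) = Dom C r" "Cod C (Cmp C U r) = Cod C U" using cat_comp[OF c] ar t by metis+
  have 2: "Cmp C R (Cmp C S (Cmp C U r)) = Cmp C (Cmp C R S) (Cmp C U r)" using cat_assoc[OF c] ar t W by metis
  have RS: "Cmp C R S \<in> Ar C" "Dom C (Cmp C R S) = Dom C S" "Cod C (Cmp C R S) = Cod C R" using cat_comp[OF c] ar t by metis+
  have RSW: "Cmp C (Cmp C R S) (Cmp C U r) \<in> Ar C" "Cod C (Cmp C (Cmp C R S) (Cmp C U r)) = Cod C R"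
    using cat_comp[OF c, of "Cmp C U r" "Cmp C R S"] RS W t by auto
  have 3: "Cmp C (Cmp C P Q) (Cmp C (Cmp C R S) (Cmp C U r)) = Cmp C P (Cmp C Q (Cmp C (Cmp C R S) (Cmp C U r)))"
    using cat_assoc[OF c] ar t RSW by metis
  have 4: "Cmp C Q (Cmp C (Cmp C R S) (Cmp C U r)) = Cmp C (Cmp C Q (Cmp C R S)) (Cmp C U r)"
    using cat_assoc[OF c] ar t RS W RSW by metis
  have 5: "Cmp C Q (Cmp C R S) = Cmp C (Cmp C Q R) S" using cat_assoc[OF c] ar t by metis
  show ?thesis using 1 2 3 4 5 by simp
qed



lemma core:
  fixes B :: "('o,'m) category" and C :: "('c,'d) category"
  assumes catB: "is_category B" and catC: "is_category C"
  and F: "is_functor B C \<alpha> Fo Fm" and G: "is_functor B C \<beta> Go Gm"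
  and T: "is_transformation B C \<alpha> \<beta> Fo Go n \<sigma> \<tau> \<phi>"
  and D: "dinatural_in B C \<alpha> \<beta> Fm Gm n \<sigma> \<tau> \<phi> x"
  and x: "x < n" and f: "f \<in> Ar B"
  and X: "length X = n" "set X \<subseteq> Ob B" "X ! x = Dom B f"
  and g0: "length g0 = length \<alpha>" "set g0 \<subseteq> Ar B" and g0': "length g0' = length \<alpha>"
  and g1: "length g1 = length \<beta>" "set g1 \<subseteq> Ar B" and g1': "length g1' = length \<beta>"
  and h0x: "\<And>p. p < length \<alpha> \<Longrightarrow> \<sigma> p = x \<Longrightarrow> g0!p = (if \<alpha>!p = Neg then f else Id B (Dom B f)) \<and> g0'!p = (if \<alpha>!p = Neg then Id B (Cod B f) else f)"
  and h0o: "\<And>p. p < length \<alpha> \<Longrightarrow> \<sigma> p \<noteq> x \<Longrightarrow> g0'!p = g0!p"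
  and h1x: "\<And>p. p < length \<beta> \<Longrightarrow> \<tau> p = x \<Longrightarrow> g1!p = (if \<beta>!p = Neg then Id B (Dom B f) else f) \<and> g1'!p = (if \<beta>!p = Neg then f else Id B (Cod B f))"
  and h1o: "\<And>p. p < length \<beta> \<Longrightarrow> \<tau> p \<noteq> x \<Longrightarrow> g1'!p = g1!p"
  and tg: "tgts B \<alpha> g0 = reindex \<sigma> (length \<alpha>) X"
  and sr: "srcs B \<beta> g1 = reindex \<tau> (length \<beta>) X"
  and r: "r \<in> Ar C" "Cod C r = Fo (srcs B \<alpha> g0)"
  shows "Cmp C (Gm g1) (Cmp C (\<phi> X) (Cmp C (Fm g0) r)) = Cmp C (Gm g1') (Cmp C (\<phi> (X[x := Cod B f])) (Cmp C (Fm g0') r))"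
proof -
  define a where "a = Dom B f"
  define b where "b = Cod B f"
  have ab: "a \<in> Ob B" "b \<in> Ob B" using cat_dom_cod[OF catB f] a_def b_def by auto
  have Ia: "Id B a \<in> Ar B" "Dom B (Id B a) = a" "Cod B (Id B a) = a" using cat_id[OF catB ab(1)] by auto
  have Ib: "Id B b \<in> Ar B" "Dom B (Id B b) = b" "Cod B (Id B b) = b" using cat_id[OF catB ab(2)] by auto
  have fd: "Dom B f = a" "Cod B f = b" using a_def b_def by auto
  have sig: "\<And>p. p < length \<alpha> \<Longrightarrow> \<sigma> p < n" and tau: "\<And>p. p < length \<beta> \<Longrightarrow> \<tau> p < n"
    using T by (auto simp: is_transformation_def maps_into_def)
  have Xob: "\<And>q. q < n \<Longrightarrow> X ! q \<in> Ob B" using X nth_in_set_sub by metis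
  have IX: "\<And>q. q < n \<Longrightarrow> Id B (X!q) \<in> Ar B \<and> Dom B (Id B (X!q)) = X!q \<and> Cod B (Id B (X!q)) = X!q"
    using cat_id[OF catB] Xob by blast
  define X' where "X' = X[x := b]"
  have X'l: "length X' = n" "set X' \<subseteq> Ob B" using X ab by (auto simp: X'_def set_update_subsetI)
  have X'n: "\<And>q. q < n \<Longrightarrow> X' ! q = (if q = x then b else X ! q)" using X by (auto simp: X'_def)
  have XA: "X[x := a] = X" using X a_def by (metis list_update_id)
  have g0a: "\<And>p. p < length \<alpha> \<Longrightarrow> g0!p \<in> Ar B" using g0 nth_in_set_sub by metis
  have g1a: "\<And>p. p < length \<beta> \<Longrightarrow> g1!p \<in> Ar B" using g1 nth_in_set_sub by metis
  have tgp: "\<And>p. p < length \<alpha> \<Longrightarrow> (if \<alpha>!p = Pos then Cod B (g0!p) else Dom B (g0!p)) = X ! \<sigma> p"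
  proof -
    fix p assume p: "p < length \<alpha>"
    have "tgts B \<alpha> g0 ! p = reindex \<sigma> (length \<alpha>) X ! p" using tg by simp
    then show "?thesis p" using p by simp
  qed
  have srp: "\<And>p. p < length \<beta> \<Longrightarrow> (if \<beta>!p = Pos then Dom B (g1!p) else Cod B (g1!p)) = X ! \<tau> p"
  proof -
    fix p assume p: "p < length \<beta>"
    have "srcs B \<beta> g1 ! p = reindex \<tau> (length \<beta>) X ! p" using sr by simp
    then show "?thesis p" using p by simp
  qed
  define s0 where "s0 = subst_arr B \<alpha> \<sigma> X x f (Id B a)"
  define s0' where "s0' = subst_arr B \<alpha> \<sigma> X x (Id B b) f"
  define s1 where "s1 = subst_arr B \<beta> \<tau> X x (Id B a) f"
  define s1' where "s1' = subst_arr B \<beta> \<tau> X x f (Id B b)"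
  define h0 where "h0 = map (\<lambda>p. if \<sigma> p = x then (if \<alpha>!p = Neg then Id B b else Id B a) else g0!p) [0..<length \<alpha>]"
  define h1 where "h1 = map (\<lambda>p. if \<tau> p = x then (if \<beta>!p = Neg then Id B a else Id B b) else g1!p) [0..<length \<beta>]"
  have len: "length s0 = length \<alpha>" "length s0' = length \<alpha>" "length h0 = length \<alpha>"
     "length s1 = length \<beta>" "length s1' = length \<beta>" "length h1 = length \<beta>"
    by (auto simp: s0_def s0'_def s1_def s1'_def h0_def h1_def)
  have s0n: "\<And>p. p < length \<alpha> \<Longrightarrow> s0!p = (if \<sigma> p = x then (if \<alpha>!p = Neg then f else Id B a) else Id B (X ! \<sigma> p))"
    by (simp add: s0_def)
  have s0'n: "\<And>p. p < length \<alpha> \<Longrightarrow> s0'!p = (if \<sigma> p = x then (if \<alpha>!p = Neg then Id B b else f) else Id B (X ! \<sigma> p))"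
    by (simp add: s0'_def)
  have s1n: "\<And>p. p < length \<beta> \<Longrightarrow> s1!p = (if \<tau> p = x then (if \<beta>!p = Neg then Id B a else f) else Id B (X ! \<tau> p))"
    by (simp add: s1_def)
  have s1'n: "\<And>p. p < length \<beta> \<Longrightarrow> s1'!p = (if \<tau> p = x then (if \<beta>!p = Neg then f else Id B b) else Id B (X ! \<tau> p))"
    by (simp add: s1'_def)
  have h0n: "\<And>p. p < length \<alpha> \<Longrightarrow> h0!p = (if \<sigma> p = x then (if \<alpha>!p = Neg then Id B b else Id B a) else g0!p)"
    by (simp add: h0_def)
  have h1n: "\<And>p. p < length \<beta> \<Longrightarrow> h1!p = (if \<tau> p = x then (if \<beta>!p = Neg then Id B a else Id B b) else g1!p)"
    by (simp add: h1_def)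
  have ar: "set s0 \<subseteq> Ar B" "set s0' \<subseteq> Ar B" "set h0 \<subseteq> Ar B" "set s1 \<subseteq> Ar B" "set s1' \<subseteq> Ar B" "set h1 \<subseteq> Ar B"
    unfolding set_conv_nth using len s0n s0'n s1n s1'n h0n h1n IX sig tau Ia Ib f g0a g1a by auto
  have e0: "g0 = cmps B \<alpha> s0 h0"
    apply (rule nth_equalityI) using g0 apply simp
    subgoal for p using g0 h0x[of p] tgp[of p] g0a[of p] s0n[of p] h0n[of p] Ia Ib fd IX[OF sig[of p]] f
      by (cases "\<alpha> ! p"; cases "\<beta> ! p") (auto simp: cat_idl[OF catB] cat_idr[OF catB])
    done
  have e0': "g0' = cmps B \<alpha> s0' h0"
    apply (rule nth_equalityI) using g0' apply simp
    subgoal for p using g0' h0x[of p] h0o[of p] tgp[of p] g0a[of p] s0'n[of p] h0n[of p] Ia Ib fd IX[OF sig[of p]] f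
      by (cases "\<alpha> ! p"; cases "\<beta> ! p") (auto simp: cat_idl[OF catB] cat_idr[OF catB])
    done
  have e1: "g1 = cmps B \<beta> h1 s1"
    apply (rule nth_equalityI) using g1 apply simp
    subgoal for p using g1 h1x[of p] srp[of p] g1a[of p] s1n[of p] h1n[of p] Ia Ib fd IX[OF tau[of p]] f
      by (cases "\<alpha> ! p"; cases "\<beta> ! p") (auto simp: cat_idl[OF catB] cat_idr[OF catB])
    done
  have e1': "g1' = cmps B \<beta> h1 s1'"
    apply (rule nth_equalityI) using g1' apply simp
    subgoal for p using g1' h1x[of p] h1o[of p] srp[of p] g1a[of p] s1'n[of p] h1n[of p] Ia Ib fd IX[OF tau[of p]] f
      by (cases "\<alpha> ! p"; cases "\<beta> ! p") (auto simp: cat_idl[OF catB] cat_idr[OF catB])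
    done
  have c0: "tgts B \<alpha> h0 = srcs B \<alpha> s0"
    apply (rule nth_equalityI) apply simp
    subgoal for p using tgp[of p] s0n[of p] h0n[of p] Ia Ib fd IX[OF sig[of p]] by auto
    done
  have c0': "tgts B \<alpha> h0 = srcs B \<alpha> s0'"
    apply (rule nth_equalityI) apply simp
    subgoal for p using tgp[of p] s0'n[of p] h0n[of p] Ia Ib fd IX[OF sig[of p]] by auto
    done
  have c1: "tgts B \<beta> s1 = srcs B \<beta> h1"
    apply (rule nth_equalityI) apply simp
    subgoal for p using srp[of p] s1n[of p] h1n[of p] Ia Ib fd IX[OF tau[of p]] by auto
    done
  have c1': "tgts B \<beta> s1' = srcs B \<beta> h1"
    apply (rule nth_equalityI) apply simp
    subgoal for p using srp[of p] s1'n[of p] h1n[of p] Ia Ib fd IX[OF tau[of p]] by auto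
    done
  have ts0: "tgts B \<alpha> s0 = reindex \<sigma> (length \<alpha>) X"
    apply (rule nth_equalityI) apply simp
    subgoal for p using s0n[of p] Ia Ib fd IX[OF sig[of p]] X by auto
    done
  have ts0': "tgts B \<alpha> s0' = reindex \<sigma> (length \<alpha>) X'"
    apply (rule nth_equalityI) apply simp
    subgoal for p using s0'n[of p] Ia Ib fd IX[OF sig[of p]] X'n[OF sig[of p]] by auto
    done
  have ss1: "srcs B \<beta> s1 = reindex \<tau> (length \<beta>) X"
    apply (rule nth_equalityI) apply simp
    subgoal for p using s1n[of p] Ia Ib fd IX[OF tau[of p]] X by auto
    done
  have ss1': "srcs B \<beta> s1' = reindex \<tau> (length \<beta>) X'"
    apply (rule nth_equalityI) apply simp
    subgoal for p using s1'n[of p] Ia Ib fd IX[OF tau[of p]] X'n[OF tau[of p]] by auto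
    done
  have sh0: "srcs B \<alpha> h0 = srcs B \<alpha> g0"
    apply (rule nth_equalityI) apply (simp add: g0)
    subgoal for p using h0x[of p] h0n[of p] Ia Ib fd f by auto
    done
  note FA = fun_ar[OF F] and GA = fun_ar[OF G]
  have TX: "\<phi> X \<in> Ar C" "Dom C (\<phi> X) = Fo (reindex \<sigma> (length \<alpha>) X)" "Cod C (\<phi> X) = Go (reindex \<tau> (length \<beta>) X)"
    using T X by (auto simp: is_transformation_def)
  have TX': "\<phi> X' \<in> Ar C" "Dom C (\<phi> X') = Fo (reindex \<sigma> (length \<alpha>) X')" "Cod C (\<phi> X') = Go (reindex \<tau> (length \<beta>) X')"
    using T X'l by (auto simp: is_transformation_def)
  have Fs0: "Fm s0 \<in> Ar C" "Dom C (Fm s0) = Fo (srcs B \<alpha> s0)" "Cod C (Fm s0) = Fo (tgts B \<alpha> s0)" using FA[of s0] len ar by auto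
  have Fs0': "Fm s0' \<in> Ar C" "Dom C (Fm s0') = Fo (srcs B \<alpha> s0')" "Cod C (Fm s0') = Fo (tgts B \<alpha> s0')" using FA[of s0'] len ar by auto
  have Fh0: "Fm h0 \<in> Ar C" "Dom C (Fm h0) = Fo (srcs B \<alpha> h0)" "Cod C (Fm h0) = Fo (tgts B \<alpha> h0)" using FA[of h0] len ar by auto
  have Gs1: "Gm s1 \<in> Ar C" "Dom C (Gm s1) = Go (srcs B \<beta> s1)" "Cod C (Gm s1) = Go (tgts B \<beta> s1)" using GA[of s1] len ar by auto
  have Gs1': "Gm s1' \<in> Ar C" "Dom C (Gm s1') = Go (srcs B \<beta> s1')" "Cod C (Gm s1') = Go (tgts B \<beta> s1')" using GA[of s1'] len ar by auto
  have Gh1: "Gm h1 \<in> Ar C" "Dom C (Gm h1) = Go (srcs B \<beta> h1)" "Cod C (Gm h1) = Go (tgts B \<beta> h1)" using GA[of h1] len ar by auto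
  have Fg0: "Fm g0 = Cmp C (Fm s0) (Fm h0)" using e0 fun_cmp[OF F, of h0 s0] len ar c0 by simp
  have Fg0': "Fm g0' = Cmp C (Fm s0') (Fm h0)" using e0' fun_cmp[OF F, of h0 s0'] len ar c0' by simp
  have Gg1: "Gm g1 = Cmp C (Gm h1) (Gm s1)" using e1 fun_cmp[OF G, of s1 h1] len ar c1 by simp
  have Gg1': "Gm g1' = Cmp C (Gm h1) (Gm s1')" using e1' fun_cmp[OF G, of s1' h1] len ar c1' by simp
  have Dn: "Cmp C (Cmp C (Gm s1) (\<phi> X)) (Fm s0) = Cmp C (Cmp C (Gm s1') (\<phi> X')) (Fm s0')"
    using D X f unfolding dinatural_in_def Let_def s0_def s0'_def s1_def s1'_def X'_def a_def b_def
    by (metis XA a_def)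
  have L: "Cmp C (Gm g1) (Cmp C (\<phi> X) (Cmp C (Fm g0) r)) = Cmp C (Gm h1) (Cmp C (Cmp C (Cmp C (Gm s1) (\<phi> X)) (Fm s0)) (Cmp C (Fm h0) r))"
    unfolding Fg0 Gg1
    by (rule chain5[OF catC Gh1(1) Gs1(1) TX(1) Fs0(1) Fh0(1) r(1)])
       (use r Gh1 Gs1 TX Fs0 Fh0 c0 c1 ts0 ss1 sh0 in auto)
  have R: "Cmp C (Gm g1') (Cmp C (\<phi> X') (Cmp C (Fm g0') r)) = Cmp C (Gm h1) (Cmp C (Cmp C (Cmp C (Gm s1') (\<phi> X')) (Fm s0')) (Cmp C (Fm h0) r))"
    unfolding Fg0' Gg1'
    by (rule chain5[OF catC Gh1(1) Gs1'(1) TX'(1) Fs0'(1) Fh0(1) r(1)])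
       (use r Gh1 Gs1' TX' Fs0' Fh0 c0' c1' ts0' ss1' sh0 in auto)
  show ?thesis using L R Dn unfolding X'_def b_def by simp
qed



lemma zchain_id: "K \<le> j \<Longrightarrow> zchain zeta j K x = x"
  by (induction K) auto

lemma zchain_step: "j < K \<Longrightarrow> zchain zeta j K x = zchain zeta (Suc j) K (zeta (Suc j) x)"
proof (induction K)
  case 0 then show ?case by simp
next
  case (Suc K)
  show ?case
  proof (cases "j = K")
    case True then show ?thesis by (simp add: zchain_id)
  next
    case False then show ?thesis using Suc by simp
  qed
qed

locale setting =
  fixes B :: "('o, 'm) category" and C :: "('c, 'd) category"
    and k :: nat and \<alpha> :: "nat \<Rightarrow> variance list"
    and Fo :: "nat \<Rightarrow> 'o list \<Rightarrow> 'c" and Fm :: "nat \<Rightarrow> 'm list \<Rightarrow> 'd"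
    and n :: "nat \<Rightarrow> nat" and \<sigma> \<tau> :: "nat \<Rightarrow> nat \<Rightarrow> nat"
    and \<phi> :: "nat \<Rightarrow> 'o list \<Rightarrow> 'd"
    and m :: "nat \<Rightarrow> nat" and zeta xip :: "nat \<Rightarrow> nat \<Rightarrow> nat"
    and i :: nat
  assumes catB: "is_category B" and catC: "is_category C"
    and k_pos: "1 \<le> k"
    and functors: "\<And>j. j \<le> k \<Longrightarrow> is_functor B C (\<alpha> j) (Fo j) (Fm j)"
    and transfs: "\<And>j. j < k \<Longrightarrow>
       is_transformation B C (\<alpha> j) (\<alpha> (Suc j)) (Fo j) (Fo (Suc j)) (n j) (\<sigma> j) (\<tau> j) (\<phi> j)"
    and pushouts: "iterated_pushouts k \<alpha> n \<sigma> \<tau> m zeta xip"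
    and i_in: "i < m (k - 1)"
    and acyc: "acyclic_on (cgraph_arcs k \<alpha> n \<sigma> \<tau>)
                 (component (cgraph_arcs k \<alpha> n \<sigma> \<tau>) k n (induced_xi k zeta xip) i)"
    and dinat: "\<And>j x. j < k \<Longrightarrow> x < n j \<Longrightarrow> induced_xi k zeta xip j x = i \<Longrightarrow>
       dinatural_in B C (\<alpha> j) (\<alpha> (Suc j)) (Fm j) (Fm (Suc j)) (n j) (\<sigma> j) (\<tau> j) (\<phi> j) x"
begin

abbreviation "xi \<equiv> induced_xi k zeta xip"
abbreviation "l \<equiv> m (k - 1)"

lemma sig_into: "j < k \<Longrightarrow> p < length (\<alpha> j) \<Longrightarrow> \<sigma> j p < n j"
  using transfs by (auto simp: is_transformation_def maps_into_def)
lemma tau_into: "j < k \<Longrightarrow> p < length (\<alpha> (Suc j)) \<Longrightarrow> \<tau> j p < n j"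
  using transfs by (auto simp: is_transformation_def maps_into_def)

lemma po: "1 \<le> j \<Longrightarrow> j < k \<Longrightarrow>
  is_pushout (length (\<alpha> j)) (m (j - 1)) (n j) (rleg \<tau> xip (j - 1)) (\<sigma> j) (m j) (zeta j) (xip j)"
  using pushouts by (simp add: iterated_pushouts_def)

lemma zchain_into: "j \<le> K \<Longrightarrow> K < k \<Longrightarrow> x < m j \<Longrightarrow> zchain zeta j K x < m K"
proof (induction K)
  case 0 then show ?case by simp
next
  case (Suc K)
  show ?case
  proof (cases "Suc K \<le> j")
    case True then have "j = Suc K" using Suc by simp
    then show ?thesis using Suc True by simp
  next
    case False
    then have "zchain zeta j K x < m K" using Suc by simp
    moreover have "maps_into (zeta (Suc K)) (m K) (m (Suc K))"
      using po[of "Suc K"] Suc by (simp add: is_pushout_def)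
    ultimately show ?thesis using False by (simp add: maps_into_def)
  qed
qed

lemma xi_into: "j < k \<Longrightarrow> t < n j \<Longrightarrow> xi j t < l"
proof -
  assume j: "j < k" and t: "t < n j"
  have "(if j = 0 then id else xip j) t < m j"
  proof (cases "j = 0")
    case True then show ?thesis using t pushouts by (simp add: iterated_pushouts_def)
  next
    case False then show ?thesis using po[of j] j t by (simp add: is_pushout_def maps_into_def)
  qed
  then show ?thesis unfolding induced_xi_def using zchain_into[of j "k - 1"] j by simp
qed

lemma xi_comm: "Suc j < k \<Longrightarrow> p < length (\<alpha> (Suc j)) \<Longrightarrow> xi (Suc j) (\<sigma> (Suc j) p) = xi j (\<tau> j p)"
proof -
  assume j: "Suc j < k" and p: "p < length (\<alpha> (Suc j))"
  have c: "zeta (Suc j) (rleg \<tau> xip j p) = xip (Suc j) (\<sigma> (Suc j) p)"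
    using po[of "Suc j"] j p by (simp add: is_pushout_def)
  have "xi (Suc j) (\<sigma> (Suc j) p) = zchain zeta (Suc j) (k - 1) (zeta (Suc j) (rleg \<tau> xip j p))"
    unfolding induced_xi_def using c by simp
  also have "\<dots> = zchain zeta j (k - 1) (rleg \<tau> xip j p)"
    using zchain_step[of j "k - 1" zeta] j by simp
  also have "\<dots> = xi j (\<tau> j p)" unfolding induced_xi_def rleg_def by simp
  finally show ?thesis .
qed

end



locale setting2 = setting +
  fixes As :: "'o list" and f :: 'm
  assumes As: "length As = m (k - 1)" "set As \<subseteq> Ob B" and f: "f \<in> Ar B"
begin

definition "Ao = Dom B f"
definition "Bo = Cod B f"
definition "Ti = {(j, t). j < k \<and> t < n j \<and> xi j t = i}"
definition "ob b = (if b then Bo else Ao)"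
definition "obj S j t = (if xi j t = i then ob ((j, t) \<in> S) else As ! xi j t)"
definition "Xs S j = map (obj S j) [0..<n j]"
definition "Lst S j p = (if j = 0 then \<alpha> 0 ! p = Neg else (j - 1, \<tau> (j - 1) p) \<in> S)"
definition "Rst S j p = (if j = k then \<alpha> k ! p = Pos else (j, \<sigma> j p) \<in> S)"
definition "var j p = (if j = k then xi (k - 1) (\<tau> (k - 1) p) else xi j (\<sigma> j p))"
definition "gg S j p = (if var j p = i then (if Lst S j p = Rst S j p then Id B (ob (Lst S j p)) else f)
                        else Id B (As ! var j p))"
definition "Gs S j = map (gg S j) [0..<length (\<alpha> j)]"

primrec NN where
  "NN S 0 = Fm 0 (Gs S 0)"
| "NN S (Suc j) = Cmp C (Fm (Suc j) (Gs S (Suc j))) (Cmp C (\<phi> j (Xs S j)) (NN S j))"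

definition "Rel = {((j, t), (Suc j, t')) | j p t t'. Suc j < k \<and> p < length (\<alpha> (Suc j)) \<and> \<alpha> (Suc j) ! p = Pos
                     \<and> \<tau> j p = t \<and> \<sigma> (Suc j) p = t' \<and> (j, t) \<in> Ti \<and> (Suc j, t') \<in> Ti}
             \<union> {((Suc j, t'), (j, t)) | j p t t'. Suc j < k \<and> p < length (\<alpha> (Suc j)) \<and> \<alpha> (Suc j) ! p = Neg
                     \<and> \<tau> j p = t \<and> \<sigma> (Suc j) p = t' \<and> (j, t) \<in> Ti \<and> (Suc j, t') \<in> Ti}"

definition "closed S \<longleftrightarrow> S \<subseteq> Ti \<and> (\<forall>u v. (u, v) \<in> Rel \<longrightarrow> u \<in> S \<longrightarrow> v \<in> S)"

lemma AoBo: "Ao \<in> Ob B" "Bo \<in> Ob B" "Dom B f = Ao" "Cod B f = Bo"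
  using cat_dom_cod[OF catB f] by (auto simp: Ao_def Bo_def)

lemma IdAB: "Id B Ao \<in> Ar B" "Dom B (Id B Ao) = Ao" "Cod B (Id B Ao) = Ao"
   "Id B Bo \<in> Ar B" "Dom B (Id B Bo) = Bo" "Cod B (Id B Bo) = Bo"
  using cat_id[OF catB AoBo(1)] cat_id[OF catB AoBo(2)] by auto

lemma ob_ob: "ob b \<in> Ob B" using AoBo by (simp add: ob_def)

lemma As_ob: "v < l \<Longrightarrow> As ! v \<in> Ob B" using As nth_in_set_sub by metis

lemma var_lt: "j < k \<Longrightarrow> var j p = xi j (\<sigma> j p)" by (simp add: var_def)

lemma var_suc: "j < k \<Longrightarrow> p < length (\<alpha> (Suc j)) \<Longrightarrow> var (Suc j) p = xi j (\<tau> j p)"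
  using xi_comm[of j p] by (cases "Suc j = k") (auto simp: var_def)

lemma var_into: "j \<le> k \<Longrightarrow> p < length (\<alpha> j) \<Longrightarrow> var j p < l"
proof (cases "j = k")
  case True
  assume "j \<le> k" "p < length (\<alpha> j)"
  then show ?thesis using True k_pos xi_into[of "k - 1" "\<tau> (k - 1) p"] tau_into[of "k - 1" p]
    by (simp add: var_def)
next
  case False
  assume "j \<le> k" "p < length (\<alpha> j)"
  then show ?thesis using False xi_into[of j "\<sigma> j p"] sig_into[of j p] by (simp add: var_def)
qed

lemma obj_ob: "j < k \<Longrightarrow> t < n j \<Longrightarrow> obj S j t \<in> Ob B"
  using ob_ob As_ob xi_into by (simp add: obj_def)

lemma Xs_len: "length (Xs S j) = n j" by (simp add: Xs_def)
lemma Xs_nth: "t < n j \<Longrightarrow> Xs S j ! t = obj S j t" by (simp add: Xs_def)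
lemma Xs_ob: "j < k \<Longrightarrow> set (Xs S j) \<subseteq> Ob B"
  using obj_ob by (auto simp: Xs_def)

lemma gg_ar: "j \<le> k \<Longrightarrow> p < length (\<alpha> j) \<Longrightarrow> gg S j p \<in> Ar B"
  using f cat_id[OF catB] ob_ob As_ob var_into by (simp add: gg_def)

lemma Gs_len: "length (Gs S j) = length (\<alpha> j)" by (simp add: Gs_def)
lemma Gs_nth: "p < length (\<alpha> j) \<Longrightarrow> Gs S j ! p = gg S j p" by (simp add: Gs_def)
lemma Gs_ar: "j \<le> k \<Longrightarrow> set (Gs S j) \<subseteq> Ar B" using gg_ar by (auto simp: Gs_def)

lemma consistent:
  assumes S: "closed S" and j: "j \<le> k" and p: "p < length (\<alpha> j)" and v: "var j p = i"
  shows "(\<alpha> j ! p = Pos \<longrightarrow> Lst S j p \<longrightarrow> Rst S j p) \<and> (\<alpha> j ! p = Neg \<longrightarrow> Rst S j p \<longrightarrow> Lst S j p)"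
proof (cases "j = 0 \<or> j = k")
  case True then show ?thesis using k_pos by (auto simp: Lst_def Rst_def)
next
  case False
  then obtain j' where j': "j = Suc j'" "Suc j' < k" using j by (cases j) auto
  have p': "p < length (\<alpha> (Suc j'))" using p j' by simp
  have L: "(j', \<tau> j' p) \<in> Ti" using tau_into[of j' p] p' j' v var_suc[of j' p] by (simp add: Ti_def)
  have R: "(Suc j', \<sigma> (Suc j') p) \<in> Ti" using sig_into[of "Suc j'" p] p' j' v var_lt[of "Suc j'" p] by (simp add: Ti_def)
  have "\<alpha> j ! p = Pos \<longrightarrow> ((j', \<tau> j' p), (Suc j', \<sigma> (Suc j') p)) \<in> Rel"
    using L R j' p' unfolding Rel_def by blast
  moreover have "\<alpha> j ! p = Neg \<longrightarrow> ((Suc j', \<sigma> (Suc j') p), (j', \<tau> j' p)) \<in> Rel"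
    using L R j' p' unfolding Rel_def by blast
  ultimately show ?thesis using S j' unfolding closed_def Lst_def Rst_def by auto
qed

lemma tg_Gs:
  assumes S: "closed S" and j: "j < k"
  shows "tgts B (\<alpha> j) (Gs S j) = reindex (\<sigma> j) (length (\<alpha> j)) (Xs S j)"
proof (rule nth_equalityI)
  show "length (tgts B (\<alpha> j) (Gs S j)) = length (reindex (\<sigma> j) (length (\<alpha> j)) (Xs S j))" by simp
  fix p assume "p < length (tgts B (\<alpha> j) (Gs S j))"
  then have p: "p < length (\<alpha> j)" by simp
  have sp: "\<sigma> j p < n j" using sig_into j p by simp
  have v: "var j p = xi j (\<sigma> j p)" using var_lt j by simp
  have R: "Rst S j p = ((j, \<sigma> j p) \<in> S)" using j by (simp add: Rst_def)
  have c: "(\<alpha> j ! p = Pos \<longrightarrow> Lst S j p \<longrightarrow> Rst S j p) \<and> (\<alpha> j ! p = Neg \<longrightarrow> Rst S j p \<longrightarrow> Lst S j p)" if "var j p = i"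
    using consistent[OF S _ p that] j by simp
  have Ia: "\<And>b. Dom B (Id B (ob b)) = ob b \<and> Cod B (Id B (ob b)) = ob b" using cat_id[OF catB ob_ob] by blast
  have IA: "Dom B (Id B (As ! var j p)) = As ! var j p \<and> Cod B (Id B (As ! var j p)) = As ! var j p"
    using cat_id[OF catB As_ob[OF var_into[of j p]]] j p by simp
  show "tgts B (\<alpha> j) (Gs S j) ! p = reindex (\<sigma> j) (length (\<alpha> j)) (Xs S j) ! p"
    using p sp v R c Ia IA AoBo IdAB
    by (cases "\<alpha> j ! p") (auto simp: Gs_nth Xs_nth gg_def obj_def ob_def)
qed

lemma sr_Gs:
  assumes S: "closed S" and j: "j < k"
  shows "srcs B (\<alpha> (Suc j)) (Gs S (Suc j)) = reindex (\<tau> j) (length (\<alpha> (Suc j))) (Xs S j)"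
proof (rule nth_equalityI)
  show "length (srcs B (\<alpha> (Suc j)) (Gs S (Suc j))) = length (reindex (\<tau> j) (length (\<alpha> (Suc j))) (Xs S j))" by simp
  fix p assume "p < length (srcs B (\<alpha> (Suc j)) (Gs S (Suc j)))"
  then have p: "p < length (\<alpha> (Suc j))" by simp
  have sp: "\<tau> j p < n j" using tau_into j p by simp
  have v: "var (Suc j) p = xi j (\<tau> j p)" using var_suc j p by simp
  have L: "Lst S (Suc j) p = ((j, \<tau> j p) \<in> S)" by (simp add: Lst_def)
  have c: "(\<alpha> (Suc j) ! p = Pos \<longrightarrow> Lst S (Suc j) p \<longrightarrow> Rst S (Suc j) p) \<and> (\<alpha> (Suc j) ! p = Neg \<longrightarrow> Rst S (Suc j) p \<longrightarrow> Lst S (Suc j) p)" if "var (Suc j) p = i"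
    using consistent[OF S _ p that] j by simp
  have Ia: "\<And>b. Dom B (Id B (ob b)) = ob b \<and> Cod B (Id B (ob b)) = ob b" using cat_id[OF catB ob_ob] by blast
  have IA: "Dom B (Id B (As ! var (Suc j) p)) = As ! var (Suc j) p \<and> Cod B (Id B (As ! var (Suc j) p)) = As ! var (Suc j) p"
    using cat_id[OF catB As_ob[OF var_into[of "Suc j" p]]] j p by simp
  show "srcs B (\<alpha> (Suc j)) (Gs S (Suc j)) ! p = reindex (\<tau> j) (length (\<alpha> (Suc j))) (Xs S j) ! p"
    using p sp v L c Ia IA AoBo IdAB
    by (cases "\<alpha> (Suc j) ! p") (auto simp: Gs_nth Xs_nth gg_def obj_def ob_def)
qed

lemma sr_Gs0: "srcs B (\<alpha> 0) (Gs S 0) = srcs B (\<alpha> 0) (Gs {} 0)"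
proof (rule nth_equalityI)
  fix p assume "p < length (srcs B (\<alpha> 0) (Gs S 0))"
  then have p: "p < length (\<alpha> 0)" by simp
  have Ia: "\<And>b. Dom B (Id B (ob b)) = ob b \<and> Cod B (Id B (ob b)) = ob b" using cat_id[OF catB ob_ob] by blast
  show "srcs B (\<alpha> 0) (Gs S 0) ! p = srcs B (\<alpha> 0) (Gs {} 0) ! p"
    using p Ia AoBo k_pos IdAB
    by (cases "\<alpha> 0 ! p") (auto simp: Gs_nth gg_def ob_def Lst_def Rst_def)
qed simp

lemma NN_typ:
  assumes S: "closed S"
  shows "j \<le> k \<Longrightarrow> NN S j \<in> Ar C \<and> Dom C (NN S j) = Fo 0 (srcs B (\<alpha> 0) (Gs S 0))
          \<and> Cod C (NN S j) = Fo j (tgts B (\<alpha> j) (Gs S j))"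
proof (induction j)
  case 0 then show ?case using fun_ar[OF functors[of 0], of "Gs S 0"] Gs_len Gs_ar[of 0] by simp
next
  case (Suc j)
  then have j: "j < k" by simp
  have IH: "NN S j \<in> Ar C" "Dom C (NN S j) = Fo 0 (srcs B (\<alpha> 0) (Gs S 0))" "Cod C (NN S j) = Fo j (tgts B (\<alpha> j) (Gs S j))"
    using Suc by auto
  have P: "\<phi> j (Xs S j) \<in> Ar C" "Dom C (\<phi> j (Xs S j)) = Fo j (reindex (\<sigma> j) (length (\<alpha> j)) (Xs S j))"
     "Cod C (\<phi> j (Xs S j)) = Fo (Suc j) (reindex (\<tau> j) (length (\<alpha> (Suc j))) (Xs S j))"
    using transfs[OF j] Xs_len Xs_ob[OF j] by (auto simp: is_transformation_def)
  have Fx: "Fm (Suc j) (Gs S (Suc j)) \<in> Ar C" "Dom C (Fm (Suc j) (Gs S (Suc j))) = Fo (Suc j) (srcs B (\<alpha> (Suc j)) (Gs S (Suc j)))"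
     "Cod C (Fm (Suc j) (Gs S (Suc j))) = Fo (Suc j) (tgts B (\<alpha> (Suc j)) (Gs S (Suc j)))"
    using fun_ar[OF functors[of "Suc j"], of "Gs S (Suc j)"] Gs_len Gs_ar[of "Suc j"] Suc by auto
  have c1: "Cmp C (\<phi> j (Xs S j)) (NN S j) \<in> Ar C \<and> Dom C (Cmp C (\<phi> j (Xs S j)) (NN S j)) = Dom C (NN S j)
     \<and> Cod C (Cmp C (\<phi> j (Xs S j)) (NN S j)) = Cod C (\<phi> j (Xs S j))"
    using cat_comp[OF catC IH(1) P(1)] IH P tg_Gs[OF S j] by simp
  show ?case using cat_comp[OF catC _ Fx(1)] c1 Fx P IH sr_Gs[OF S j] by simp
qed

end



context setting2
begin

lemma phiNN_typ:
  assumes S: "closed S" and j: "j < k"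
  shows "Cmp C (\<phi> j (Xs S j)) (NN S j) \<in> Ar C \<and>
         Cod C (Cmp C (\<phi> j (Xs S j)) (NN S j)) = Fo (Suc j) (srcs B (\<alpha> (Suc j)) (Gs S (Suc j)))"
proof -
  have IH: "NN S j \<in> Ar C" "Cod C (NN S j) = Fo j (tgts B (\<alpha> j) (Gs S j))"
    using NN_typ[OF S, of j] j by auto
  have P: "\<phi> j (Xs S j) \<in> Ar C" "Dom C (\<phi> j (Xs S j)) = Fo j (reindex (\<sigma> j) (length (\<alpha> j)) (Xs S j))"
     "Cod C (\<phi> j (Xs S j)) = Fo (Suc j) (reindex (\<tau> j) (length (\<alpha> (Suc j))) (Xs S j))"
    using transfs[OF j] Xs_len Xs_ob[OF j] by (auto simp: is_transformation_def)
  show ?thesis using cat_comp[OF catC IH(1) P(1)] IH P tg_Gs[OF S j] sr_Gs[OF S j] by simp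
qed

lemma Lst_ins: "Lst (insert (j0, x) S0) j p = (Lst S0 j p \<or> (j = Suc j0 \<and> \<tau> j0 p = x))"
  by (auto simp: Lst_def)

lemma Rst_ins: "Rst (insert (j0, x) S0) j p = (Rst S0 j p \<or> (j \<noteq> k \<and> j = j0 \<and> \<sigma> j0 p = x))"
  by (auto simp: Rst_def)

lemma step:
  assumes S0: "closed S0" and S: "closed (insert (j0, x) S0)" and t: "(j0, x) \<in> Ti" and tn: "(j0, x) \<notin> S0"
  shows "NN S0 k = NN (insert (j0, x) S0) k"
proof -
  define S where "S = insert (j0, x) S0"
  have j0: "j0 < k" "x < n j0" "xi j0 x = i" using t by (auto simp: Ti_def)
  have Geq: "\<And>j. j \<noteq> j0 \<Longrightarrow> j \<noteq> Suc j0 \<Longrightarrow> Gs S0 j = Gs S j"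
    by (auto simp: S_def Gs_def gg_def Lst_ins Rst_ins)
  have Xeq: "\<And>j. j \<noteq> j0 \<Longrightarrow> Xs S0 j = Xs S j"
    by (auto simp: S_def Xs_def obj_def)
  have a: "\<And>j. j < j0 \<Longrightarrow> NN S0 j = NN S j"
  proof -
    fix j show "j < j0 \<Longrightarrow> NN S0 j = NN S j"
      by (induction j) (auto simp: Geq Xeq)
  qed
  define r where "r = (if j0 = 0 then Id C (Fo 0 (srcs B (\<alpha> 0) (Gs S0 0)))
                       else Cmp C (\<phi> (j0 - 1) (Xs S0 (j0 - 1))) (NN S0 (j0 - 1)))"
  have NNs: "NN S0 j0 = Cmp C (Fm j0 (Gs S0 j0)) r \<and> NN S j0 = Cmp C (Fm j0 (Gs S j0)) r"
  proof (cases j0)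
    case 0
    have F0: "Dom C (Fm 0 (Gs S0 0)) = Fo 0 (srcs B (\<alpha> 0) (Gs S0 0))" "Fm 0 (Gs S0 0) \<in> Ar C"
      "Dom C (Fm 0 (Gs S 0)) = Fo 0 (srcs B (\<alpha> 0) (Gs S0 0))" "Fm 0 (Gs S 0) \<in> Ar C"
      using fun_ar[OF functors[of 0], of "Gs S0 0"] fun_ar[OF functors[of 0], of "Gs S 0"]
        Gs_len Gs_ar[of 0] sr_Gs0[of S] sr_Gs0[of S0] by auto
    show ?thesis using 0 F0 cat_idr[OF catC] by (simp add: r_def)
  next
    case (Suc j')
    then show ?thesis using a[of j'] Xeq[of j'] by (simp add: r_def)
  qed
  have rt: "r \<in> Ar C \<and> Cod C r = Fo j0 (srcs B (\<alpha> j0) (Gs S0 j0))"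
  proof (cases j0)
    case 0
    have F0: "Dom C (Fm 0 (Gs S0 0)) = Fo 0 (srcs B (\<alpha> 0) (Gs S0 0))" "Fm 0 (Gs S0 0) \<in> Ar C"
      using fun_ar[OF functors[of 0], of "Gs S0 0"] Gs_len Gs_ar[of 0] by auto
    have "Fo 0 (srcs B (\<alpha> 0) (Gs S0 0)) \<in> Ob C" using cat_dom_cod[OF catC F0(2)] F0(1) by simp
    then show ?thesis using 0 cat_id[OF catC] by (simp add: r_def)
  next
    case (Suc j')
    then show ?thesis using phiNN_typ[OF S0, of j'] j0 by (simp add: r_def)
  qed
  have Xx: "Xs S0 j0 ! x = Dom B f" using j0 tn by (simp add: Xs_nth obj_def ob_def AoBo)
  have Xup: "(Xs S0 j0)[x := Cod B f] = Xs S j0"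
    apply (rule nth_equalityI)
    using j0 by (auto simp: Xs_len Xs_nth obj_def ob_def AoBo S_def nth_list_update)
  have h0x: "Gs S0 j0 ! p = (if \<alpha> j0 ! p = Neg then f else Id B (Dom B f)) \<and>
             Gs S j0 ! p = (if \<alpha> j0 ! p = Neg then Id B (Cod B f) else f)"
    if p: "p < length (\<alpha> j0)" and sp: "\<sigma> j0 p = x" for p
  proof -
    have v: "var j0 p = i" using var_lt[OF j0(1)] sp j0 by simp
    have R0: "\<not> Rst S0 j0 p" "Rst S j0 p" using j0 sp tn by (auto simp: Rst_def S_def)
    have L: "Lst S j0 p = Lst S0 j0 p" using sp by (auto simp: S_def Lst_ins)
    have c0: "\<alpha> j0 ! p = Pos \<longrightarrow> \<not> Lst S0 j0 p" using consistent[OF S0 _ p v] j0 R0 by auto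
    have c1: "\<alpha> j0 ! p = Neg \<longrightarrow> Lst S j0 p" using consistent[OF S[folded S_def] _ p v] j0 R0 by auto
    show ?thesis using p v R0 L c0 c1
      by (cases "\<alpha> j0 ! p") (auto simp: Gs_nth gg_def ob_def AoBo)
  qed
  have h0o: "Gs S j0 ! p = Gs S0 j0 ! p" if p: "p < length (\<alpha> j0)" and sp: "\<sigma> j0 p \<noteq> x" for p
    using p sp by (auto simp: Gs_nth gg_def S_def Lst_ins Rst_ins)
  have h1x: "Gs S0 (Suc j0) ! p = (if \<alpha> (Suc j0) ! p = Neg then Id B (Dom B f) else f) \<and>
             Gs S (Suc j0) ! p = (if \<alpha> (Suc j0) ! p = Neg then f else Id B (Cod B f))"
    if p: "p < length (\<alpha> (Suc j0))" and sp: "\<tau> j0 p = x" for p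
  proof -
    have v: "var (Suc j0) p = i" using var_suc[OF j0(1) p] sp j0 by simp
    have L0: "\<not> Lst S0 (Suc j0) p" "Lst S (Suc j0) p" using j0 sp tn by (auto simp: Lst_def S_def)
    have R: "Rst S (Suc j0) p = Rst S0 (Suc j0) p" using sp by (auto simp: S_def Rst_ins)
    have c0: "\<alpha> (Suc j0) ! p = Neg \<longrightarrow> \<not> Rst S0 (Suc j0) p" using consistent[OF S0 _ p v] j0 L0 by auto
    have c1: "\<alpha> (Suc j0) ! p = Pos \<longrightarrow> Rst S (Suc j0) p" using consistent[OF S[folded S_def] _ p v] j0 L0 by auto
    show ?thesis using p v L0 R c0 c1
      by (cases "\<alpha> (Suc j0) ! p") (auto simp: Gs_nth gg_def ob_def AoBo)
  qed
  have h1o: "Gs S (Suc j0) ! p = Gs S0 (Suc j0) ! p" if p: "p < length (\<alpha> (Suc j0))" and sp: "\<tau> j0 p \<noteq> x" for p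
    using p sp by (auto simp: Gs_nth gg_def S_def Lst_ins Rst_ins)
  have core_inst: "Cmp C (Fm (Suc j0) (Gs S0 (Suc j0))) (Cmp C (\<phi> j0 (Xs S0 j0)) (Cmp C (Fm j0 (Gs S0 j0)) r))
     = Cmp C (Fm (Suc j0) (Gs S (Suc j0))) (Cmp C (\<phi> j0 ((Xs S0 j0)[x := Cod B f])) (Cmp C (Fm j0 (Gs S j0)) r))"
    apply (rule core[OF catB catC functors[of j0] functors[of "Suc j0"] transfs[of j0] dinat[of j0 x] _ f])
    using j0 Xs_len Xs_ob[OF j0(1)] Xx Gs_len Gs_ar h0x h0o h1x h1o tg_Gs[OF S0 j0(1)] sr_Gs[OF S0 j0(1)] rt
    by auto
  have b: "NN S0 (Suc j0) = NN S (Suc j0)"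
    using core_inst NNs Xup by simp
  have c: "\<And>j. Suc j0 \<le> j \<Longrightarrow> NN S0 j = NN S j"
  proof -
    fix j show "Suc j0 \<le> j \<Longrightarrow> NN S0 j = NN S j"
    proof (induction j)
      case 0 then show ?case by simp
    next
      case (Suc j)
      show ?case
      proof (cases "Suc j = Suc j0")
        case True then show ?thesis using b by simp
      next
        case False then show ?thesis using Suc Geq Xeq by simp
      qed
    qed
  qed
  show ?thesis using c[of k] j0 by (simp add: S_def)
qed

end



context setting2
begin

lemma Ti_fin: "finite Ti"
proof -
  have "Ti \<subseteq> Sigma {..<k} (\<lambda>j. {..<n j})" by (auto simp: Ti_def)
  then show ?thesis by (rule finite_subset) auto
qed

lemma Rel_sub: "Rel \<subseteq> Ti \<times> Ti" by (auto simp: Rel_def)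

lemma Rel_fin: "finite Rel" using Rel_sub Ti_fin finite_subset by blast

lemma Rel_acyclic: "acyclic Rel"
proof -
  define E where "E = cgraph_arcs k \<alpha> n \<sigma> \<tau>"
  define V where "V = component E k n xi i"
  define E' where "E' = E \<inter> V \<times> V"
  have acE: "acyclic E'" using acyc by (simp add: E'_def V_def E_def acyclic_on_def)
  have TV: "Trans j t \<in> V" if "(j, t) \<in> Ti" for j t
    using that by (auto simp: V_def component_def Ti_def)
  have PV: "q \<in> V" if "(j, t) \<in> Ti" "(Trans j t, q) \<in> E" for j t q
  proof -
    have "(Trans j t, q) \<in> (E \<union> E\<inverse>)\<^sup>*" using that(2) by blast
    then show ?thesis using that(1) by (auto simp: V_def component_def Ti_def)
  qed
  have PV2: "q \<in> V" if "(j, t) \<in> Ti" "(q, Trans j t) \<in> E" for j t q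
  proof -
    have "(Trans j t, q) \<in> (E \<union> E\<inverse>)\<^sup>*" using that(2) by blast
    then show ?thesis using that(1) by (auto simp: V_def component_def Ti_def)
  qed
  have edge: "(Trans (fst u) (snd u), Trans (fst v) (snd v)) \<in> E'\<^sup>+" if uv: "(u, v) \<in> Rel" for u v
  proof -
    from uv consider (pos) j p t t' where "u = (j, t)" "v = (Suc j, t')" "Suc j < k" "p < length (\<alpha> (Suc j))"
        "\<alpha> (Suc j) ! p = Pos" "\<tau> j p = t" "\<sigma> (Suc j) p = t'" "(j, t) \<in> Ti" "(Suc j, t') \<in> Ti"
      | (neg) j p t t' where "u = (Suc j, t')" "v = (j, t)" "Suc j < k" "p < length (\<alpha> (Suc j))"
        "\<alpha> (Suc j) ! p = Neg" "\<tau> j p = t" "\<sigma> (Suc j) p = t'" "(j, t) \<in> Ti" "(Suc j, t') \<in> Ti"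
      unfolding Rel_def by blast
    then show ?thesis
    proof cases
      case pos
      have e1: "(Trans j t, Place (Suc j) p) \<in> E" using pos unfolding E_def cgraph_arcs_def Ti_def by simp
      have e2: "(Place (Suc j) p, Trans (Suc j) t') \<in> E" using pos unfolding E_def cgraph_arcs_def Ti_def by simp
      have "(Trans j t, Place (Suc j) p) \<in> E'" "(Place (Suc j) p, Trans (Suc j) t') \<in> E'"
        using e1 e2 TV PV pos by (auto simp: E'_def)
      then show ?thesis using pos by simp
    next
      case neg
      have e1: "(Trans (Suc j) t', Place (Suc j) p) \<in> E" using neg unfolding E_def cgraph_arcs_def Ti_def by simp
      have e2: "(Place (Suc j) p, Trans j t) \<in> E" using neg unfolding E_def cgraph_arcs_def Ti_def by simp
      have "(Trans (Suc j) t', Place (Suc j) p) \<in> E'" "(Place (Suc j) p, Trans j t) \<in> E'"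
        using e1 e2 TV PV neg by (auto simp: E'_def)
      then show ?thesis using neg by simp
    qed
  qed
  have path: "(Trans (fst u) (snd u), Trans (fst v) (snd v)) \<in> E'\<^sup>+" if "(u, v) \<in> Rel\<^sup>+" for u v
    using that
  proof (induction rule: trancl_induct)
    case (base y) then show ?case by (rule edge)
  next
    case (step y z) show ?case by (rule trancl_trans[OF step.IH edge[OF step.hyps(2)]])
  qed
  show ?thesis unfolding acyclic_def
  proof (intro allI notI)
    fix u assume "(u, u) \<in> Rel\<^sup>+"
    then have "(Trans (fst u) (snd u), Trans (fst u) (snd u)) \<in> E'\<^sup>+" by (rule path)
    with acE show False by (simp add: acyclic_def)
  qed
qed

lemma Rel_wf: "wf Rel" using finite_acyclic_wf[OF Rel_fin Rel_acyclic] .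

lemma all_closed: "closed S \<Longrightarrow> NN S k = NN {} k"
proof (induction "card S" arbitrary: S rule: less_induct)
  case less
  show ?case
  proof (cases "S = {}")
    case True then show ?thesis by simp
  next
    case False
    then obtain t where t: "t \<in> S" "\<And>y. (y, t) \<in> Rel \<Longrightarrow> y \<notin> S"
      using wfE_min'[OF Rel_wf] by blast
    define S0 where "S0 = S - {t}"
    have fin: "finite S" using less.prems Ti_fin finite_subset by (auto simp: closed_def)
    have cS: "S \<subseteq> Ti" "\<And>u v. (u, v) \<in> Rel \<Longrightarrow> u \<in> S \<Longrightarrow> v \<in> S"
      using less.prems unfolding closed_def by auto
    have cS0: "closed S0" unfolding closed_def
    proof (intro conjI allI impI)
      show "S0 \<subseteq> Ti" using cS(1) by (auto simp: S0_def)
      fix u v assume uv: "(u, v) \<in> Rel" and u: "u \<in> S0"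
      have uS: "u \<in> S" using u by (simp add: S0_def)
      have "v \<in> S" using cS(2)[OF uv uS] .
      moreover have "v \<noteq> t" using t(2)[of u] uv uS by blast
      ultimately show "v \<in> S0" by (simp add: S0_def)
    qed
    have tTi: "t \<in> Ti" using less.prems t by (auto simp: closed_def)
    obtain j0 x where tt: "t = (j0, x)" by (cases t)
    have SS: "S = insert (j0, x) S0" using t tt by (auto simp: S0_def)
    have cI: "closed (insert (j0, x) S0)" using SS less.prems by simp
    have tn: "(j0, x) \<notin> S0" using tt by (simp add: S0_def)
    have "NN S0 k = NN (insert (j0, x) S0) k" by (rule step[OF cS0 cI]) (use tTi tt tn in auto)
    then have "NN S0 k = NN S k" using SS by simp
    moreover have "card S0 < card S" using fin t(1) unfolding S0_def by (rule card_Diff1_less)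
    ultimately show ?thesis using less.hyps[of S0] cS0 by simp
  qed
qed

lemma closed_empty: "closed {}" by (simp add: closed_def)
lemma closed_Ti: "closed Ti" using Rel_sub by (auto simp: closed_def)

end



context setting2
begin

abbreviation "cc \<equiv> comp_components C \<phi> n xi"

lemma Xs_const:
  assumes sb: "\<And>j t. j < k \<Longrightarrow> t < n j \<Longrightarrow> xi j t = i \<Longrightarrow> ((j, t) \<in> S \<longleftrightarrow> bb)" and j: "j < k"
  shows "Xs S j = reindex (xi j) (n j) (As[i := ob bb])"
  apply (rule nth_equalityI)
   apply (simp add: Xs_len)
  using sb j xi_into As i_in by (auto simp: Xs_len Xs_nth obj_def nth_list_update)

lemma Gs_int:
  assumes sb: "\<And>j t. j < k \<Longrightarrow> t < n j \<Longrightarrow> xi j t = i \<Longrightarrow> ((j, t) \<in> S \<longleftrightarrow> bb)" and j: "Suc j < k"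
  shows "Gs S (Suc j) = map (Id B) (reindex (\<tau> j) (length (\<alpha> (Suc j))) (Xs S j))"
proof (rule nth_equalityI)
  fix p assume "p < length (Gs S (Suc j))"
  then have p: "p < length (\<alpha> (Suc j))" by (simp add: Gs_len)
  have v: "var (Suc j) p = xi j (\<tau> j p)" using var_suc j p by simp
  have v2: "var (Suc j) p = xi (Suc j) (\<sigma> (Suc j) p)" using var_lt j by simp
  have tp: "\<tau> j p < n j" using tau_into j p by simp
  have sp: "\<sigma> (Suc j) p < n (Suc j)" using sig_into j p by simp
  show "Gs S (Suc j) ! p = map (Id B) (reindex (\<tau> j) (length (\<alpha> (Suc j))) (Xs S j)) ! p"
  proof (cases "var (Suc j) p = i")
    case True
    have L: "Lst S (Suc j) p = bb" using sb[of j "\<tau> j p"] j tp v True by (simp add: Lst_def)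
    have R: "Rst S (Suc j) p = bb" using sb[of "Suc j" "\<sigma> (Suc j) p"] j sp v2 True by (simp add: Rst_def)
    have "Gs S (Suc j) ! p = Id B (ob bb)" using p True L R by (simp add: Gs_nth gg_def)
    moreover have "Xs S j ! (\<tau> j p) = ob bb" using tp True v L by (simp add: Xs_nth obj_def Lst_def)
    ultimately show ?thesis using p by simp
  next
    case False
    have "Gs S (Suc j) ! p = Id B (As ! var (Suc j) p)" using p False by (simp add: Gs_nth gg_def)
    moreover have "Xs S j ! (\<tau> j p) = As ! var (Suc j) p" using tp False v by (simp add: Xs_nth obj_def)
    ultimately show ?thesis using p by simp
  qed
qed (simp add: Gs_len)

lemma cc_lemma:
  assumes S: "closed S" and sb: "\<And>j t. j < k \<Longrightarrow> t < n j \<Longrightarrow> xi j t = i \<Longrightarrow> ((j, t) \<in> S \<longleftrightarrow> bb)"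
  shows "j < k \<Longrightarrow> cc j (As[i := ob bb]) \<in> Ar C
     \<and> Dom C (cc j (As[i := ob bb])) = Fo 0 (tgts B (\<alpha> 0) (Gs S 0))
     \<and> Cod C (cc j (As[i := ob bb])) = Fo (Suc j) (reindex (\<tau> j) (length (\<alpha> (Suc j))) (Xs S j))
     \<and> Cmp C (\<phi> j (Xs S j)) (NN S j) = Cmp C (cc j (As[i := ob bb])) (Fm 0 (Gs S 0))"
proof (induction j)
  case 0
  have k0: "0 < k" using k_pos by simp
  have P: "\<phi> 0 (Xs S 0) \<in> Ar C" "Dom C (\<phi> 0 (Xs S 0)) = Fo 0 (reindex (\<sigma> 0) (length (\<alpha> 0)) (Xs S 0))"
     "Cod C (\<phi> 0 (Xs S 0)) = Fo (Suc 0) (reindex (\<tau> 0) (length (\<alpha> (Suc 0))) (Xs S 0))"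
  proof -
    have "length (Xs S 0) = n 0 \<and> set (Xs S 0) \<subseteq> Ob B" using Xs_len Xs_ob[OF k0] by simp
    then show "\<phi> 0 (Xs S 0) \<in> Ar C" "Dom C (\<phi> 0 (Xs S 0)) = Fo 0 (reindex (\<sigma> 0) (length (\<alpha> 0)) (Xs S 0))"
     "Cod C (\<phi> 0 (Xs S 0)) = Fo (Suc 0) (reindex (\<tau> 0) (length (\<alpha> (Suc 0))) (Xs S 0))"
      using transfs[OF k0] unfolding is_transformation_def by blast+
  qed
  have X0: "cc 0 (As[i := ob bb]) = \<phi> 0 (Xs S 0)" using Xs_const[OF sb k0] by (simp only: comp_components.simps)
  have T0: "tgts B (\<alpha> 0) (Gs S 0) = reindex (\<sigma> 0) (length (\<alpha> 0)) (Xs S 0)" by (rule tg_Gs[OF S k0])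
  show ?case unfolding X0 T0 using P by simp
next
  case (Suc j)
  then have j: "j < k" "Suc j < k" by auto
  let ?A = "As[i := ob bb]"
  have IH: "cc j ?A \<in> Ar C" "Dom C (cc j ?A) = Fo 0 (tgts B (\<alpha> 0) (Gs S 0))"
    "Cod C (cc j ?A) = Fo (Suc j) (reindex (\<tau> j) (length (\<alpha> (Suc j))) (Xs S j))"
    "Cmp C (\<phi> j (Xs S j)) (NN S j) = Cmp C (cc j ?A) (Fm 0 (Gs S 0))" using Suc j by auto
  have P: "\<phi> (Suc j) (Xs S (Suc j)) \<in> Ar C" "Dom C (\<phi> (Suc j) (Xs S (Suc j))) = Fo (Suc j) (reindex (\<sigma> (Suc j)) (length (\<alpha> (Suc j))) (Xs S (Suc j)))"
     "Cod C (\<phi> (Suc j) (Xs S (Suc j))) = Fo (Suc (Suc j)) (reindex (\<tau> (Suc j)) (length (\<alpha> (Suc (Suc j)))) (Xs S (Suc j)))"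
    using transfs[OF j(2)] Xs_len Xs_ob[OF j(2)] by (auto simp: is_transformation_def)
  have F0: "Fm 0 (Gs S 0) \<in> Ar C" "Cod C (Fm 0 (Gs S 0)) = Fo 0 (tgts B (\<alpha> 0) (Gs S 0))"
    using fun_ar[OF functors[of 0], of "Gs S 0"] Gs_len Gs_ar[of 0] by auto
  define objs where "objs = reindex (\<tau> j) (length (\<alpha> (Suc j))) (Xs S j)"
  have objs_nth: "objs ! p \<in> Ob B" if p: "p < length (\<alpha> (Suc j))" for p
  proof -
    have "\<tau> j p < length (Xs S j)" using tau_into[OF j(1) p] Xs_len by simp
    then have "Xs S j ! (\<tau> j p) \<in> Ob B" by (rule nth_in_set_sub[OF Xs_ob[OF j(1)]])
    then show ?thesis using p by (simp add: objs_def)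
  qed
  have objs_ob: "set objs \<subseteq> Ob B" "length objs = length (\<alpha> (Suc j))"
  proof -
    show l: "length objs = length (\<alpha> (Suc j))" by (simp add: objs_def)
    show "set objs \<subseteq> Ob B" unfolding set_conv_nth using objs_nth l by auto
  qed
  have GI: "Gs S (Suc j) = map (Id B) objs" unfolding objs_def by (rule Gs_int[OF sb j(2)])
  have FI: "Fm (Suc j) (Gs S (Suc j)) = Id C (Fo (Suc j) objs)"
  proof -
    have fS: "is_functor B C (\<alpha> (Suc j)) (Fo (Suc j)) (Fm (Suc j))" using functors j by simp
    show ?thesis unfolding GI by (rule fun_id[OF fS objs_ob(2) objs_ob(1)])
  qed
  have tgI: "tgts B (\<alpha> (Suc j)) (Gs S (Suc j)) = objs"
  proof (rule nth_equalityI)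
    fix p assume "p < length (tgts B (\<alpha> (Suc j)) (Gs S (Suc j)))"
    then have p: "p < length (\<alpha> (Suc j))" by simp
    have "Dom B (Id B (objs ! p)) = objs ! p" "Cod B (Id B (objs ! p)) = objs ! p"
      using cat_id[OF catB objs_nth[OF p]] by auto
    then show "tgts B (\<alpha> (Suc j)) (Gs S (Suc j)) ! p = objs ! p" using p objs_ob(2) by (simp add: GI)
  qed (simp add: objs_ob)
  have PN: "Cmp C (\<phi> j (Xs S j)) (NN S j) \<in> Ar C \<and> Cod C (Cmp C (\<phi> j (Xs S j)) (NN S j)) = Fo (Suc j) objs"
    using phiNN_typ[OF S j(1)] sr_Gs[OF S j(1)] by (simp add: objs_def)
  have N: "NN S (Suc j) = Cmp C (cc j ?A) (Fm 0 (Gs S 0))"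
  proof -
    have "NN S (Suc j) = Cmp C (Id C (Fo (Suc j) objs)) (Cmp C (\<phi> j (Xs S j)) (NN S j))" using FI by simp
    also have "\<dots> = Cmp C (\<phi> j (Xs S j)) (NN S j)" using cat_idl[OF catC] PN by blast
    finally show ?thesis using IH(4) by simp
  qed
  have dP: "Dom C (\<phi> (Suc j) (Xs S (Suc j))) = Fo (Suc j) objs"
    using P(2) tg_Gs[OF S j(2)] tgI by simp
  have XS: "Xs S (Suc j) = reindex (xi (Suc j)) (n (Suc j)) ?A" using Xs_const[OF sb j(2)] .
  have cs: "cc (Suc j) ?A = Cmp C (\<phi> (Suc j) (Xs S (Suc j))) (cc j ?A)" using XS by (simp only: comp_components.simps)
  have cod: "Cod C (cc j ?A) = Dom C (\<phi> (Suc j) (Xs S (Suc j)))" using IH(3) dP by (simp add: objs_def)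
  have as: "Cmp C (\<phi> (Suc j) (Xs S (Suc j))) (Cmp C (cc j ?A) (Fm 0 (Gs S 0)))
          = Cmp C (Cmp C (\<phi> (Suc j) (Xs S (Suc j))) (cc j ?A)) (Fm 0 (Gs S 0))"
    by (rule cat_assoc[OF catC F0(1) IH(1) P(1)]) (use F0(2) IH(2) cod in simp_all)
  have ty: "Cmp C (\<phi> (Suc j) (Xs S (Suc j))) (cc j ?A) \<in> Ar C
     \<and> Dom C (Cmp C (\<phi> (Suc j) (Xs S (Suc j))) (cc j ?A)) = Dom C (cc j ?A)
     \<and> Cod C (Cmp C (\<phi> (Suc j) (Xs S (Suc j))) (cc j ?A)) = Cod C (\<phi> (Suc j) (Xs S (Suc j)))"
    by (rule cat_comp[OF catC IH(1) P(1) cod])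
  show ?case unfolding cs
  proof (intro conjI)
    show "Cmp C (\<phi> (Suc j) (Xs S (Suc j))) (NN S (Suc j)) = Cmp C (Cmp C (\<phi> (Suc j) (Xs S (Suc j))) (cc j ?A)) (Fm 0 (Gs S 0))"
      unfolding N by (rule as)
  qed (use ty P(3) IH(2) in simp_all)
qed

lemma NN_final:
  assumes S: "closed S" and sb: "\<And>j t. j < k \<Longrightarrow> t < n j \<Longrightarrow> xi j t = i \<Longrightarrow> ((j, t) \<in> S \<longleftrightarrow> bb)"
  shows "NN S k = Cmp C (Cmp C (Fm k (Gs S k)) (cc (k - 1) (As[i := ob bb]))) (Fm 0 (Gs S 0))"
proof -
  obtain k' where k': "k = Suc k'" using k_pos by (cases k) auto
  have c: "cc k' (As[i := ob bb]) \<in> Ar C"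
     "Dom C (cc k' (As[i := ob bb])) = Fo 0 (tgts B (\<alpha> 0) (Gs S 0))"
     "Cod C (cc k' (As[i := ob bb])) = Fo (Suc k') (reindex (\<tau> k') (length (\<alpha> (Suc k'))) (Xs S k'))"
     "Cmp C (\<phi> k' (Xs S k')) (NN S k') = Cmp C (cc k' (As[i := ob bb])) (Fm 0 (Gs S 0))"
    using cc_lemma[OF S sb, of k'] k' by auto
  have F0: "Fm 0 (Gs S 0) \<in> Ar C" "Cod C (Fm 0 (Gs S 0)) = Fo 0 (tgts B (\<alpha> 0) (Gs S 0))"
    using fun_ar[OF functors[of 0], of "Gs S 0"] Gs_len Gs_ar[of 0] by auto
  have Fk: "Fm k (Gs S k) \<in> Ar C" "Dom C (Fm k (Gs S k)) = Fo k (srcs B (\<alpha> k) (Gs S k))"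
    using fun_ar[OF functors[of k], of "Gs S k"] Gs_len Gs_ar[of k] by auto
  have "NN S (Suc k') = Cmp C (Fm (Suc k') (Gs S (Suc k'))) (Cmp C (\<phi> k' (Xs S k')) (NN S k'))" by simp
  then have "NN S k = Cmp C (Fm k (Gs S k)) (Cmp C (\<phi> k' (Xs S k')) (NN S k'))" by (simp only: k'[symmetric])
  then have "NN S k = Cmp C (Fm k (Gs S k)) (Cmp C (cc k' (As[i := ob bb])) (Fm 0 (Gs S 0)))"
    unfolding c(4) .
  also have "\<dots> = Cmp C (Cmp C (Fm k (Gs S k)) (cc k' (As[i := ob bb]))) (Fm 0 (Gs S 0))"
  proof -
    have kk: "k' < k" using k' by simp
    have s: "srcs B (\<alpha> k) (Gs S k) = reindex (\<tau> k') (length (\<alpha> k)) (Xs S k')"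
      using sr_Gs[OF S kk] unfolding k'[symmetric] .
    have c3: "Cod C (cc k' (As[i := ob bb])) = Fo k (reindex (\<tau> k') (length (\<alpha> k)) (Xs S k'))"
      using c(3) unfolding k'[symmetric] .
    have cd: "Cod C (cc k' (As[i := ob bb])) = Dom C (Fm k (Gs S k))"
      unfolding Fk(2) s by (rule c3)
    have cd0: "Cod C (Fm 0 (Gs S 0)) = Dom C (cc k' (As[i := ob bb]))"
      unfolding F0(2) c(2) ..
    show ?thesis by (rule cat_assoc[OF catC F0(1) c(1) Fk(1) cd0 cd])
  qed
  finally show ?thesis
  proof -
    have km: "k - 1 = k'" using k' by simp
    assume "NN S k = Cmp C (Cmp C (Fm k (Gs S k)) (cc k' (As[i := ob bb]))) (Fm 0 (Gs S 0))"
    then show ?thesis unfolding km .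
  qed
qed

lemma Gs_bounds:
  "Gs {} 0 = subst_arr B (\<alpha> 0) (xi 0 \<circ> \<sigma> 0) As i f (Id B Ao)"
  "Gs {} k = subst_arr B (\<alpha> k) (xi (k - 1) \<circ> \<tau> (k - 1)) As i (Id B Ao) f"
  "Gs Ti 0 = subst_arr B (\<alpha> 0) (xi 0 \<circ> \<sigma> 0) As i (Id B Bo) f"
  "Gs Ti k = subst_arr B (\<alpha> k) (xi (k - 1) \<circ> \<tau> (k - 1)) As i f (Id B Bo)"
proof -
  have k0: "k \<noteq> 0" using k_pos by simp
  have kk: "Suc (k - 1) = k" "k - 1 < k" using k_pos by auto
  show "Gs {} 0 = subst_arr B (\<alpha> 0) (xi 0 \<circ> \<sigma> 0) As i f (Id B Ao)"
    by (rule nth_equalityI) (use k0 in \<open>auto simp: Gs_len Gs_nth gg_def var_def Lst_def Rst_def ob_def\<close>)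
  show "Gs {} k = subst_arr B (\<alpha> k) (xi (k - 1) \<circ> \<tau> (k - 1)) As i (Id B Ao) f"
    by (rule nth_equalityI) (use k0 in \<open>auto simp: Gs_len Gs_nth gg_def var_def Lst_def Rst_def ob_def\<close>)
  show "Gs Ti 0 = subst_arr B (\<alpha> 0) (xi 0 \<circ> \<sigma> 0) As i (Id B Bo) f"
    by (rule nth_equalityI) (use k0 sig_into[of 0] in \<open>auto simp: Gs_len Gs_nth gg_def var_def Lst_def Rst_def ob_def Ti_def\<close>)
  show "Gs Ti k = subst_arr B (\<alpha> k) (xi (k - 1) \<circ> \<tau> (k - 1)) As i f (Id B Bo)"
    by (rule nth_equalityI) (use k0 kk tau_into[of "k - 1"] in \<open>auto simp: Gs_len Gs_nth gg_def var_def Lst_def Rst_def ob_def Ti_def\<close>)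
qed

lemma result:
  "Cmp C (Cmp C (Fm k (subst_arr B (\<alpha> k) (xi (k - 1) \<circ> \<tau> (k - 1)) As i (Id B (Dom B f)) f))
                 (cc (k - 1) (As[i := Dom B f])))
         (Fm 0 (subst_arr B (\<alpha> 0) (xi 0 \<circ> \<sigma> 0) As i f (Id B (Dom B f))))
 = Cmp C (Cmp C (Fm k (subst_arr B (\<alpha> k) (xi (k - 1) \<circ> \<tau> (k - 1)) As i f (Id B (Cod B f))))
                 (cc (k - 1) (As[i := Cod B f])))
         (Fm 0 (subst_arr B (\<alpha> 0) (xi 0 \<circ> \<sigma> 0) As i (Id B (Cod B f)) f))"
proof -
  have e: "NN {} k = Cmp C (Cmp C (Fm k (Gs {} k)) (cc (k - 1) (As[i := ob False]))) (Fm 0 (Gs {} 0))"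
    by (rule NN_final[OF closed_empty]) simp
  have t: "NN Ti k = Cmp C (Cmp C (Fm k (Gs Ti k)) (cc (k - 1) (As[i := ob True]))) (Fm 0 (Gs Ti 0))"
    by (rule NN_final[OF closed_Ti]) (simp add: Ti_def)
  have "NN Ti k = NN {} k" by (rule all_closed[OF closed_Ti])
  then show ?thesis using e t Gs_bounds by (simp add: ob_def Ao_def Bo_def)
qed

end



theorem mainTheorem5:
  fixes B :: "('o, 'm) category" and C :: "('c, 'd) category"
    and k :: nat and \<alpha> :: "nat \<Rightarrow> variance list"
    and Fo :: "nat \<Rightarrow> 'o list \<Rightarrow> 'c" and Fm :: "nat \<Rightarrow> 'm list \<Rightarrow> 'd"
    and n :: "nat \<Rightarrow> nat" and \<sigma> \<tau> :: "nat \<Rightarrow> nat \<Rightarrow> nat"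
    and \<phi> :: "nat \<Rightarrow> 'o list \<Rightarrow> 'd"
    and m :: "nat \<Rightarrow> nat" and zeta xip :: "nat \<Rightarrow> nat \<Rightarrow> nat"
    and i :: nat
  assumes catB: "is_category B" and catC: "is_category C"
    and k_pos: "1 \<le> k"
    and functors: "\<And>j. j \<le> k \<Longrightarrow> is_functor B C (\<alpha> j) (Fo j) (Fm j)"
    and transfs: "\<And>j. j < k \<Longrightarrow>
       is_transformation B C (\<alpha> j) (\<alpha> (Suc j)) (Fo j) (Fo (Suc j)) (n j) (\<sigma> j) (\<tau> j) (\<phi> j)"
    and pushouts: "iterated_pushouts k \<alpha> n \<sigma> \<tau> m zeta xip"
    and i_in: "i < m (k - 1)"
    and acyc: "acyclic_on (cgraph_arcs k \<alpha> n \<sigma> \<tau>)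
                 (component (cgraph_arcs k \<alpha> n \<sigma> \<tau>) k n (induced_xi k zeta xip) i)"
    and dinat: "\<And>j x. j < k \<Longrightarrow> x < n j \<Longrightarrow> induced_xi k zeta xip j x = i \<Longrightarrow>
       dinatural_in B C (\<alpha> j) (\<alpha> (Suc j)) (Fm j) (Fm (Suc j)) (n j) (\<sigma> j) (\<tau> j) (\<phi> j) x"
  shows "dinatural_in B C (\<alpha> 0) (\<alpha> k) (Fm 0) (Fm k) (m (k - 1))
           (induced_xi k zeta xip 0 \<circ> \<sigma> 0) (induced_xi k zeta xip (k - 1) \<circ> \<tau> (k - 1))
           (comp_components C \<phi> n (induced_xi k zeta xip) (k - 1)) i"
proof -
  interpret setting B C k \<alpha> Fo Fm n \<sigma> \<tau> \<phi> m zeta xip i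
    by (rule setting.intro) (fact catB catC k_pos functors transfs pushouts i_in acyc dinat)+
  show ?thesis unfolding dinatural_in_def Let_def
  proof (intro allI impI)
    fix As f assume H: "length As = m (k - 1) \<and> set As \<subseteq> Ob B \<and> f \<in> Ar B"
    interpret s2: setting2 B C k \<alpha> Fo Fm n \<sigma> \<tau> \<phi> m zeta xip i As f
      by (rule setting2.intro, unfold_locales) (use H in auto)
    show "Cmp C (Cmp C (Fm k (subst_arr B (\<alpha> k) (induced_xi k zeta xip (k - 1) \<circ> \<tau> (k - 1)) As i (Id B (Dom B f)) f))
                 (comp_components C \<phi> n (induced_xi k zeta xip) (k - 1) (As[i := Dom B f])))
         (Fm 0 (subst_arr B (\<alpha> 0) (induced_xi k zeta xip 0 \<circ> \<sigma> 0) As i f (Id B (Dom B f))))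
       = Cmp C (Cmp C (Fm k (subst_arr B (\<alpha> k) (induced_xi k zeta xip (k - 1) \<circ> \<tau> (k - 1)) As i f (Id B (Cod B f))))
                 (comp_components C \<phi> n (induced_xi k zeta xip) (k - 1) (As[i := Cod B f])))
         (Fm 0 (subst_arr B (\<alpha> 0) (induced_xi k zeta xip 0 \<circ> \<sigma> 0) As i (Id B (Cod B f)) f))"
      by (rule s2.result)
  qed
qed


end
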